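(* Let $\mathbb{X}$ be a Cartesian $k$-differential abstract Kleisli category with differential combinator $\mathsf{D}$ and abstract Kleisli structure $(\mathsf{S},\epsilon,\vartheta)$. Then the monad $\mathbb{S}=(\mathsf{S},\delta,\vartheta)$ on $\vartheta\text{-}\mathsf{nat}[\mathbb{X}]$, where $\delta_A=\mathsf{S}(\epsilon_A)$, is a Cartesian $k$-differential monad on the Cartesian $k$-differential category $\vartheta\text{-}\mathsf{nat}[\mathbb{X}]$ (with structure inherited from $\mathbb{X}$). Furthermore, the isomorphism of categories $\mathsf{G}_\vartheta:\mathbb{X}\to\mathsf{KL}(\mathbb{S})$, identity on objects and given on $f:A\to B$ by $\llbracket\mathsf{G}_\vartheta(f)\rrbracket=\mathsf{S}(f)\circ\vartheta_A$ (with inverse $\mathsf{G}^{-1}_\vartheta(\llbracket f\rrbracket)=\epsilon_B\circ\llbracket f\rrbracket$), is a strict Cartesian $k$-differential functor, as is its inverse, where $\mathsf{KL}(\mathbb{S})$ carries the Cartesian $k$-differential structure lifted from $\vartheta\text{-}\mathsf{nat}[\mathbb{X}]$ (products of objects as in the base, $\llbracket\pi_j\rrbracket=\vartheta_{A_j}\circ\pi_j$, $\llbracket\langle f_1,\dots,f_n\rangle\rrbracket=\omega^{-1}\circ\langle\llbracket f_1\rrbracket,\dots,\llbracket f_n\rrbracket\rangle$, $k$-module structure inherited, and $\llbracket\mathsf{D}_\mathbb{S}[f]\rrbracket=\mathsf{D}[\llbracket f\rrbracket]$). Hence $\mathbb{X}\cong\mathsf{KL}(\mathbb{S})$ as Cartesian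 $k$-differential categories.
   Context: Fix a commutative semiring $k$. A left $k$-linear category is a category $\mathbb{X}$ in which each hom-set $\mathbb{X}(A,B)$ is a $k$-module (scalar multiplication $r\cdot f$, addition $+$, zero $0$) such that precomposition is $k$-linear: $(r\cdot f+s\cdot g)\circ x=r\cdot(f\circ x)+s\cdot(g\circ x)$. A map $f$ is $k$-linear if $f\circ(r\cdot x+s\cdot y)=r\cdot(f\circ x)+s\cdot(f\circ y)$ for all suitable $x,y$ and $r,s\in k$. A Cartesian left $k$-linear category is a left $k$-linear category with finite products (terminal object $\ast$, projections $\pi_j:A_1\times\cdots\times A_n\to A_j$, pairing $\langle-,\dots,-\rangle$) in which all projections are $k$-linear. A Cartesian $k$-differential category is a Cartesian left $k$-linear category equipped with a differential combinator $\mathsf{D}$ assigning to each $f:A\to B$ a map $\mathsf{D}[f]:A\times A\to B$ such that: [CD.1] $\mathsf{D}[r\cdot f+s\cdot g]=r\cdot\mathsf{D}[f]+s\cdot\mathsf{D}[g]$; [CD.2] $\mathsf{D}[f]\circ\langle\pi_1,r\cdot\pi_2+s\cdot\pi_3\rangle=r\cdot(\mathsf{D}[f]\circ\langle\pi_1,\pi_2\rangle)+s\cdot(\mathsf{D}[f]\circ\langle\pi_1,\pi_3\rangle)$ (as maps $A\times A\times A\to B$); [CD.3] $\mathsf{D}[1_A]=\pi_2$ and, for $\pi_j:A_1\times\cdots\times A_n\to A_j$, $\mathsf{D}[\pi_j]=\pi_{n+j}$; [CD.4] $\mathsf{D}[\langle f_1,\dots,f_n\rangle]=\langle\mathsf{D}[f_1],\dots,\mathsf{D}[f_n]\rangle$;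 [CD.5] $\mathsf{D}[g\circ f]=\mathsf{D}[g]\circ\langle f\circ\pi_1,\mathsf{D}[f]\rangle$; [CD.6] $\mathsf{D}[\mathsf{D}[f]]\circ\langle\pi_1,0,0,\pi_2\rangle=\mathsf{D}[f]$; [CD.7] $\mathsf{D}[\mathsf{D}[f]]\circ\langle\pi_1,\pi_2,\pi_3,\pi_4\rangle=\mathsf{D}[\mathsf{D}[f]]\circ\langle\pi_1,\pi_3,\pi_2,\pi_4\rangle$ (identifying $(A\times A)\times(A\times A)$ with $A\times A\times A\times A$). A map $f$ is $\mathsf{D}$-linear if $\mathsf{D}[f]=f\circ\pi_2$. For Cartesian left $k$-linear categories $\mathbb{X},\mathbb{Y}$, a strong Cartesian $k$-linear functor is a functor $\mathsf{F}:\mathbb{X}\to\mathbb{Y}$ such that $\mathsf{F}(\ast)\to\ast$ is an isomorphism, the canonical maps $\omega_{A_1,\dots,A_n}=\langle\mathsf{F}(\pi_1),\dots,\mathsf{F}(\pi_n)\rangle:\mathsf{F}(A_1\times\cdots\times A_n)\to\mathsf{F}(A_1)\times\cdots\times\mathsf{F}(A_n)$ are isomorphisms, and $\mathsf{F}(r\cdot f+s\cdot g)=r\cdot\mathsf{F}(f)+s\cdot\mathsf{F}(g)$. It is strict if moreover $\omega$ is the identity. For Cartesian $k$-differential categories, a strong Cartesian $k$-differential functor is a strong Cartesian $k$-linear functor with $\mathsf{D}[\mathsf{F}(f)]=\mathsf{F}(\mathsf{D}[f])\circ\omega^{-1}_{A,A}$ for all $f:A\to B$; a strict Cartesian $k$-differential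 functor is a strict Cartesian $k$-linear functor with $\mathsf{D}[\mathsf{F}(f)]=\mathsf{F}(\mathsf{D}[f])$. A Cartesian $k$-differential monad on a Cartesian $k$-differential category $\mathbb{X}$ is a monad $\mathbb{S}=(\mathsf{S},\mu,\eta)$ on $\mathbb{X}$ such that $\mathsf{S}$ is a strong Cartesian $k$-differential functor and every $\eta_A$ and $\mu_A$ is $\mathsf{D}$-linear. Kleisli category notation: $\mathsf{KL}(\mathbb{S})$ has the objects of the base and a map $f:A\to B$ is a base map $\llbracket f\rrbracket:A\to\mathsf{S}(B)$; identities $\llbracket 1_A\rrbracket=\eta_A$, composition $\llbracket g\circ f\rrbracket=\mu_C\circ\mathsf{S}(\llbracket g\rrbracket)\circ\llbracket f\rrbracket$. An abstract Kleisli structure on a category $\mathbb{X}$ is a triple $(\mathsf{S},\epsilon,\vartheta)$ of an endofunctor $\mathsf{S}$, a natural transformation $\epsilon_A:\mathsf{S}(A)\to A$, and a family of maps $\vartheta_A:A\to\mathsf{S}(A)$ (not necessarily natural) such that $\vartheta_{\mathsf{S}(A)}$ is natural in $A$ and $\epsilon_A\circ\vartheta_A=1_A$, $\epsilon_{\mathsf{S}(A)}\circ\mathsf{S}(\vartheta_A)=1_{\mathsf{S}(A)}$, $\vartheta_{\mathsf{S}(A)}\circ\vartheta_A=\mathsf{S}(\vartheta_A)\circ\vartheta_A$. A map $f:A\to B$ is $\vartheta$-natural if $\vartheta_B\circ f=\mathsf{S}(f)\circ\vartheta_A$; $\vartheta\text{-}\mathsf{nat}[\mathbb{X}]$ denotes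 the subcategory of $\vartheta$-natural maps. It is known (Führmann) that $\mathsf{S}$ restricts to an endofunctor of $\vartheta\text{-}\mathsf{nat}[\mathbb{X}]$, that $(\mathsf{S},\delta,\vartheta)$ with $\delta_A=\mathsf{S}(\epsilon_A)$ is a monad on $\vartheta\text{-}\mathsf{nat}[\mathbb{X}]$, and that $\mathsf{G}_\vartheta$ as in the claim is an isomorphism of categories. A Cartesian $k$-differential abstract Kleisli category is a Cartesian $k$-differential category $\mathbb{X}$ with an abstract Kleisli structure $(\mathsf{S},\epsilon,\vartheta)$ such that all projections are $\vartheta$-natural, $\mathsf{S}$ is a strong Cartesian $k$-differential functor, and every $\epsilon_A$ and $\vartheta_A$ is $\mathsf{D}$-linear. In this situation $\vartheta\text{-}\mathsf{nat}[\mathbb{X}]$ is a sub-Cartesian $k$-differential category of $\mathbb{X}$. *)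

theory Defs
  imports Main
begin

section \<open>Categories (arrows of a single type, relativised to hom-sets)\<close>

record ('o,'a) cat =
  obj :: "'o set"
  arr :: "'a set"
  dm  :: "'a \<Rightarrow> 'o"
  cd  :: "'a \<Rightarrow> 'o"
  ident :: "'o \<Rightarrow> 'a"
  cmp :: "'a \<Rightarrow> 'a \<Rightarrow> 'a"   (* cmp C g f = g o f *)

text \<open>Finite products are given by a chosen terminal object and chosen binary products
  (n-ary products are the iterated binary ones).\<close>

record ('o,'a,'k) cdc = "('o,'a) cat" +
  smul :: "'k \<Rightarrow> 'a \<Rightarrow> 'a"
  pls  :: "'a \<Rightarrow> 'a \<Rightarrow> 'a"
  zr   :: "'o \<Rightarrow> 'o \<Rightarrow> 'a"
  trm  :: "'o"
  bng  :: "'o \<Rightarrow> 'a"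
  prd  :: "'o \<Rightarrow> 'o \<Rightarrow> 'o"
  p1   :: "'o \<Rightarrow> 'o \<Rightarrow> 'a"
  p2   :: "'o \<Rightarrow> 'o \<Rightarrow> 'a"
  tup  :: "'a \<Rightarrow> 'a \<Rightarrow> 'a"
  Dif  :: "'a \<Rightarrow> 'a"

definition hom :: "('o,'a,'m) cat_scheme \<Rightarrow> 'o \<Rightarrow> 'o \<Rightarrow> 'a set" where
  "hom C A B = {f \<in> arr C. dm C f = A \<and> cd C f = B}"

definition category :: "('o,'a,'m) cat_scheme \<Rightarrow> bool" where
  "category C \<longleftrightarrow>
     (\<forall>f \<in> arr C. dm C f \<in> obj C \<and> cd C f \<in> obj C) \<and>
     (\<forall>A \<in> obj C. ident C A \<in> hom C A A) \<and>
     (\<forall>A B D f g. f \<in> hom C A B \<longrightarrow> g \<in> hom C B D \<longrightarrow> cmp C g f \<in> hom C A D) \<and>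
     (\<forall>A B f. f \<in> hom C A B \<longrightarrow> cmp C (ident C B) f = f \<and> cmp C f (ident C A) = f) \<and>
     (\<forall>A B D E f g h. f \<in> hom C A B \<longrightarrow> g \<in> hom C B D \<longrightarrow> h \<in> hom C D E \<longrightarrow>
        cmp C h (cmp C g f) = cmp C (cmp C h g) f)"

definition left_klinear :: "('o,'a,'k::comm_semiring_1,'m) cdc_scheme \<Rightarrow> bool" where
  "left_klinear C \<longleftrightarrow> category C \<and>
     (\<forall>A B. A \<in> obj C \<longrightarrow> B \<in> obj C \<longrightarrow>
        zr C A B \<in> hom C A B \<and>
        (\<forall>f \<in> hom C A B. \<forall>g \<in> hom C A B. \<forall>h \<in> hom C A B. \<forall>r s.
           pls C f g \<in> hom C A B \<and> smul C r f \<in> hom C A B \<and>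
           pls C (pls C f g) h = pls C f (pls C g h) \<and>
           pls C f g = pls C g f \<and>
           pls C f (zr C A B) = f \<and>
           smul C r (pls C f g) = pls C (smul C r f) (smul C r g) \<and>
           smul C (r + s) f = pls C (smul C r f) (smul C s f) \<and>
           smul C (r * s) f = smul C r (smul C s f) \<and>
           smul C 1 f = f \<and>
           smul C 0 f = zr C A B \<and>
           smul C r (zr C A B) = zr C A B)) \<and>
     (\<forall>A B D f g x r s. f \<in> hom C B D \<longrightarrow> g \<in> hom C B D \<longrightarrow> x \<in> hom C A B \<longrightarrow>
        cmp C (pls C (smul C r f) (smul C s g)) x = pls C (smul C r (cmp C f x)) (smul C s (cmp C g x)))"

definition klinear_map :: "('o,'a,'k::comm_semiring_1,'m) cdc_scheme \<Rightarrow> 'a \<Rightarrow> bool" where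
  "klinear_map C f \<longleftrightarrow> (\<forall>A x y r s. x \<in> hom C A (dm C f) \<longrightarrow> y \<in> hom C A (dm C f) \<longrightarrow>
      cmp C f (pls C (smul C r x) (smul C s y)) = pls C (smul C r (cmp C f x)) (smul C s (cmp C f y)))"

definition has_products :: "('o,'a,'k,'m) cdc_scheme \<Rightarrow> bool" where
  "has_products C \<longleftrightarrow>
     trm C \<in> obj C \<and>
     (\<forall>A \<in> obj C. bng C A \<in> hom C A (trm C) \<and> (\<forall>f \<in> hom C A (trm C). f = bng C A)) \<and>
     (\<forall>A \<in> obj C. \<forall>B \<in> obj C.
        prd C A B \<in> obj C \<and> p1 C A B \<in> hom C (prd C A B) A \<and> p2 C A B \<in> hom C (prd C A B) B \<and>
        (\<forall>D f g. f \<in> hom C D A \<longrightarrow> g \<in> hom C D B \<longrightarrow>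
           tup C f g \<in> hom C D (prd C A B) \<and>
           cmp C (p1 C A B) (tup C f g) = f \<and> cmp C (p2 C A B) (tup C f g) = g) \<and>
        (\<forall>D h. h \<in> hom C D (prd C A B) \<longrightarrow>
           tup C (cmp C (p1 C A B) h) (cmp C (p2 C A B) h) = h))"

definition cart_left_klinear :: "('o,'a,'k::comm_semiring_1,'m) cdc_scheme \<Rightarrow> bool" where
  "cart_left_klinear C \<longleftrightarrow> left_klinear C \<and> has_products C \<and>
     (\<forall>A \<in> obj C. \<forall>B \<in> obj C. klinear_map C (p1 C A B) \<and> klinear_map C (p2 C A B))"

definition cart_diff_cat :: "('o,'a,'k::comm_semiring_1,'m) cdc_scheme \<Rightarrow> bool" where
  "cart_diff_cat C \<longleftrightarrow> cart_left_klinear C \<and>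
   (\<forall>A \<in> obj C. \<forall>B \<in> obj C.
     (\<forall>f \<in> hom C A B. Dif C f \<in> hom C (prd C A A) B) \<and>
     \<comment> \<open>CD.1\<close>
     (\<forall>f \<in> hom C A B. \<forall>g \<in> hom C A B. \<forall>r s.
        Dif C (pls C (smul C r f) (smul C s g)) = pls C (smul C r (Dif C f)) (smul C s (Dif C g))) \<and>
     \<comment> \<open>CD.2, maps A x (A x A) \<rightarrow> B\<close>
     (\<forall>f \<in> hom C A B. \<forall>r s.
        (let AA = prd C A A; T = prd C A AA;
             q1 = p1 C A AA; q2 = cmp C (p1 C A A) (p2 C A AA); q3 = cmp C (p2 C A A) (p2 C A AA)
         in cmp C (Dif C f) (tup C q1 (pls C (smul C r q2) (smul C s q3)))
            = pls C (smul C r (cmp C (Dif C f) (tup C q1 q2))) (smul C s (cmp C (Dif C f) (tup C q1 q3))))) \<and>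
     \<comment> \<open>CD.3\<close>
     Dif C (ident C A) = p2 C A A \<and>
     Dif C (p1 C A B) = cmp C (p1 C A B) (p2 C (prd C A B) (prd C A B)) \<and>
     Dif C (p2 C A B) = cmp C (p2 C A B) (p2 C (prd C A B) (prd C A B)) \<and>
     \<comment> \<open>CD.4 (nullary and binary pairing)\<close>
     Dif C (bng C A) = bng C (prd C A A) \<and>
     (\<forall>D. D \<in> obj C \<longrightarrow> (\<forall>f \<in> hom C A B. \<forall>g \<in> hom C A D.
        Dif C (tup C f g) = tup C (Dif C f) (Dif C g))) \<and>
     \<comment> \<open>CD.5\<close>
     (\<forall>D. D \<in> obj C \<longrightarrow> (\<forall>f \<in> hom C A B. \<forall>g \<in> hom C B D.
        Dif C (cmp C g f) = cmp C (Dif C g) (tup C (cmp C f (p1 C A A)) (Dif C f)))) \<and>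
     \<comment> \<open>CD.6 and CD.7, maps (A x A) x (A x A) \<rightarrow> B\<close>
     (\<forall>f \<in> hom C A B.
        (let Q = prd C A A in
          cmp C (Dif C (Dif C f))
             (tup C (tup C (p1 C A A) (zr C Q A)) (tup C (zr C Q A) (p2 C A A))) = Dif C f \<and>
          (let x1 = cmp C (p1 C A A) (p1 C Q Q); x2 = cmp C (p2 C A A) (p1 C Q Q);
               x3 = cmp C (p1 C A A) (p2 C Q Q); x4 = cmp C (p2 C A A) (p2 C Q Q) in
           cmp C (Dif C (Dif C f)) (tup C (tup C x1 x2) (tup C x3 x4))
             = cmp C (Dif C (Dif C f)) (tup C (tup C x1 x3) (tup C x2 x4))))))"

definition D_linear :: "('o,'a,'k,'m) cdc_scheme \<Rightarrow> 'a \<Rightarrow> bool" where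
  "D_linear C f \<longleftrightarrow> Dif C f = cmp C f (p2 C (dm C f) (dm C f))"

definition is_functor :: "('o,'a,'m) cat_scheme \<Rightarrow> ('p,'b,'n) cat_scheme \<Rightarrow>
    ('o \<Rightarrow> 'p) \<Rightarrow> ('a \<Rightarrow> 'b) \<Rightarrow> bool" where
  "is_functor C E Fo Fa \<longleftrightarrow> category C \<and> category E \<and>
     (\<forall>A \<in> obj C. Fo A \<in> obj E \<and> Fa (ident C A) = ident E (Fo A)) \<and>
     (\<forall>A B f. f \<in> hom C A B \<longrightarrow> Fa f \<in> hom E (Fo A) (Fo B)) \<and>
     (\<forall>A B D f g. f \<in> hom C A B \<longrightarrow> g \<in> hom C B D \<longrightarrow> Fa (cmp C g f) = cmp E (Fa g) (Fa f))"

definition is_iso :: "('o,'a,'m) cat_scheme \<Rightarrow> 'a \<Rightarrow> 'o \<Rightarrow> 'o \<Rightarrow> bool" where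
  "is_iso C f A B \<longleftrightarrow> f \<in> hom C A B \<and>
     (\<exists>g \<in> hom C B A. cmp C g f = ident C A \<and> cmp C f g = ident C B)"

definition inv_arr :: "('o,'a,'m) cat_scheme \<Rightarrow> 'a \<Rightarrow> 'o \<Rightarrow> 'o \<Rightarrow> 'a" where
  "inv_arr C f A B = (THE g. g \<in> hom C B A \<and> cmp C g f = ident C A \<and> cmp C f g = ident C B)"

definition omegaF :: "('o,'a,'k,'m) cdc_scheme \<Rightarrow> ('p,'b,'l,'n) cdc_scheme \<Rightarrow>
    ('a \<Rightarrow> 'b) \<Rightarrow> 'o \<Rightarrow> 'o \<Rightarrow> 'b" where
  "omegaF C E Fa A B = tup E (Fa (p1 C A B)) (Fa (p2 C A B))"

definition strong_cart_klinear_functor :: "('o,'a,'k::comm_semiring_1,'m) cdc_scheme \<Rightarrow>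
    ('p,'b,'k,'n) cdc_scheme \<Rightarrow> ('o \<Rightarrow> 'p) \<Rightarrow> ('a \<Rightarrow> 'b) \<Rightarrow> bool" where
  "strong_cart_klinear_functor C E Fo Fa \<longleftrightarrow> is_functor C E Fo Fa \<and>
     is_iso E (bng E (Fo (trm C))) (Fo (trm C)) (trm E) \<and>
     (\<forall>A \<in> obj C. \<forall>B \<in> obj C.
        is_iso E (omegaF C E Fa A B) (Fo (prd C A B)) (prd E (Fo A) (Fo B))) \<and>
     (\<forall>A B f g r s. f \<in> hom C A B \<longrightarrow> g \<in> hom C A B \<longrightarrow>
        Fa (pls C (smul C r f) (smul C s g)) = pls E (smul E r (Fa f)) (smul E s (Fa g)))"

definition strict_cart_klinear_functor :: "('o,'a,'k::comm_semiring_1,'m) cdc_scheme \<Rightarrow>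
    ('p,'b,'k,'n) cdc_scheme \<Rightarrow> ('o \<Rightarrow> 'p) \<Rightarrow> ('a \<Rightarrow> 'b) \<Rightarrow> bool" where
  "strict_cart_klinear_functor C E Fo Fa \<longleftrightarrow> strong_cart_klinear_functor C E Fo Fa \<and>
     Fo (trm C) = trm E \<and>
     (\<forall>A \<in> obj C. \<forall>B \<in> obj C. Fo (prd C A B) = prd E (Fo A) (Fo B) \<and>
        omegaF C E Fa A B = ident E (prd E (Fo A) (Fo B)))"

definition strong_cart_diff_functor :: "('o,'a,'k::comm_semiring_1,'m) cdc_scheme \<Rightarrow>
    ('p,'b,'k,'n) cdc_scheme \<Rightarrow> ('o \<Rightarrow> 'p) \<Rightarrow> ('a \<Rightarrow> 'b) \<Rightarrow> bool" where
  "strong_cart_diff_functor C E Fo Fa \<longleftrightarrow> strong_cart_klinear_functor C E Fo Fa \<and>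
     (\<forall>A B f. f \<in> hom C A B \<longrightarrow>
        Dif E (Fa f) = cmp E (Fa (Dif C f))
          (inv_arr E (omegaF C E Fa A A) (Fo (prd C A A)) (prd E (Fo A) (Fo A))))"

definition strict_cart_diff_functor :: "('o,'a,'k::comm_semiring_1,'m) cdc_scheme \<Rightarrow>
    ('p,'b,'k,'n) cdc_scheme \<Rightarrow> ('o \<Rightarrow> 'p) \<Rightarrow> ('a \<Rightarrow> 'b) \<Rightarrow> bool" where
  "strict_cart_diff_functor C E Fo Fa \<longleftrightarrow> strict_cart_klinear_functor C E Fo Fa \<and>
     (\<forall>A B f. f \<in> hom C A B \<longrightarrow> Dif E (Fa f) = Fa (Dif C f))"

definition monad :: "('o,'a,'m) cat_scheme \<Rightarrow> ('o \<Rightarrow> 'o) \<Rightarrow> ('a \<Rightarrow> 'a) \<Rightarrow>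
    ('o \<Rightarrow> 'a) \<Rightarrow> ('o \<Rightarrow> 'a) \<Rightarrow> bool" where
  "monad C So Sa mu eta \<longleftrightarrow> is_functor C C So Sa \<and>
     (\<forall>A \<in> obj C. eta A \<in> hom C A (So A) \<and> mu A \<in> hom C (So (So A)) (So A) \<and>
        cmp C (mu A) (Sa (mu A)) = cmp C (mu A) (mu (So A)) \<and>
        cmp C (mu A) (eta (So A)) = ident C (So A) \<and>
        cmp C (mu A) (Sa (eta A)) = ident C (So A)) \<and>
     (\<forall>A B f. f \<in> hom C A B \<longrightarrow>
        cmp C (eta B) f = cmp C (Sa f) (eta A) \<and>
        cmp C (mu B) (Sa (Sa f)) = cmp C (Sa f) (mu A))"

definition cart_diff_monad :: "('o,'a,'k::comm_semiring_1,'m) cdc_scheme \<Rightarrow> ('o \<Rightarrow> 'o) \<Rightarrow>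
    ('a \<Rightarrow> 'a) \<Rightarrow> ('o \<Rightarrow> 'a) \<Rightarrow> ('o \<Rightarrow> 'a) \<Rightarrow> bool" where
  "cart_diff_monad C So Sa mu eta \<longleftrightarrow> cart_diff_cat C \<and> monad C So Sa mu eta \<and>
     strong_cart_diff_functor C C So Sa \<and>
     (\<forall>A \<in> obj C. D_linear C (eta A) \<and> D_linear C (mu A))"

definition abstract_kleisli :: "('o,'a,'m) cat_scheme \<Rightarrow> ('o \<Rightarrow> 'o) \<Rightarrow> ('a \<Rightarrow> 'a) \<Rightarrow>
    ('o \<Rightarrow> 'a) \<Rightarrow> ('o \<Rightarrow> 'a) \<Rightarrow> bool" where
  "abstract_kleisli C So Sa eps th \<longleftrightarrow> is_functor C C So Sa \<and>
     (\<forall>A \<in> obj C. eps A \<in> hom C (So A) A \<and> th A \<in> hom C A (So A) \<and>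
        cmp C (eps A) (th A) = ident C A \<and>
        cmp C (eps (So A)) (Sa (th A)) = ident C (So A) \<and>
        cmp C (th (So A)) (th A) = cmp C (Sa (th A)) (th A)) \<and>
     (\<forall>A B f. f \<in> hom C A B \<longrightarrow>
        cmp C f (eps A) = cmp C (eps B) (Sa f) \<and>
        cmp C (th (So B)) (Sa f) = cmp C (Sa (Sa f)) (th (So A)))"

definition theta_natural :: "('o,'a,'m) cat_scheme \<Rightarrow> ('a \<Rightarrow> 'a) \<Rightarrow> ('o \<Rightarrow> 'a) \<Rightarrow> 'a \<Rightarrow> bool" where
  "theta_natural C Sa th f \<longleftrightarrow>
     cmp C (th (cd C f)) f = cmp C (Sa f) (th (dm C f))"

definition theta_nat :: "('o,'a,'k,'m) cdc_scheme \<Rightarrow> ('a \<Rightarrow> 'a) \<Rightarrow> ('o \<Rightarrow> 'a) \<Rightarrow>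
    ('o,'a,'k,'m) cdc_scheme" where
  "theta_nat C Sa th = C\<lparr>arr := {f \<in> arr C. theta_natural C Sa th f}\<rparr>"

definition cart_diff_abstract_kleisli :: "('o,'a,'k::comm_semiring_1,'m) cdc_scheme \<Rightarrow>
    ('o \<Rightarrow> 'o) \<Rightarrow> ('a \<Rightarrow> 'a) \<Rightarrow> ('o \<Rightarrow> 'a) \<Rightarrow> ('o \<Rightarrow> 'a) \<Rightarrow> bool" where
  "cart_diff_abstract_kleisli C So Sa eps th \<longleftrightarrow> cart_diff_cat C \<and>
     abstract_kleisli C So Sa eps th \<and>
     (\<forall>A \<in> obj C. \<forall>B \<in> obj C.
        theta_natural C Sa th (p1 C A B) \<and> theta_natural C Sa th (p2 C A B)) \<and>
     strong_cart_diff_functor C C So Sa \<and>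
     (\<forall>A \<in> obj C. D_linear C (eps A) \<and> D_linear C (th A))"

text \<open>A Kleisli map f : A \<rightarrow> B is the triple (A, B, [[f]]) with [[f]] : A \<rightarrow> S(B) in theta-nat[X].\<close>

definition kl_cat :: "('o,'a,'k,'m) cdc_scheme \<Rightarrow> ('o \<Rightarrow> 'o) \<Rightarrow> ('a \<Rightarrow> 'a) \<Rightarrow>
    ('o \<Rightarrow> 'a) \<Rightarrow> ('o \<Rightarrow> 'a) \<Rightarrow> ('o, 'o \<times> 'o \<times> 'a, 'k) cdc" where
  "kl_cat X So Sa eps th =
    (let Y = theta_nat X Sa th;
         delta = (\<lambda>A. Sa (eps A));
         om = (\<lambda>A B. tup Y (Sa (p1 Y A B)) (Sa (p2 Y A B)));
         omi = (\<lambda>A B. inv_arr Y (om A B) (So (prd Y A B)) (prd Y (So A) (So B)))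
     in \<lparr> obj = obj Y,
         arr = {(A, B, f) | A B f. B \<in> obj Y \<and> f \<in> hom Y A (So B)},
         dm = (\<lambda>(A, B, f). A),
         cd = (\<lambda>(A, B, f). B),
         ident = (\<lambda>A. (A, A, th A)),
         cmp = (\<lambda>(B', D, g) (A, B, f). (A, D, cmp Y (delta D) (cmp Y (Sa g) f))),
         smul = (\<lambda>r (A, B, f). (A, B, smul Y r f)),
         pls = (\<lambda>(A, B, f) (A', B', g). (A, B, pls Y f g)),
         zr = (\<lambda>A B. (A, B, zr Y A (So B))),
         trm = trm Y,
         bng = (\<lambda>A. (A, trm Y,
                 cmp Y (inv_arr Y (bng Y (So (trm Y))) (So (trm Y)) (trm Y)) (bng Y A))),
         prd = prd Y,
         p1 = (\<lambda>A B. (prd Y A B, A, cmp Y (th A) (p1 Y A B))),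
         p2 = (\<lambda>A B. (prd Y A B, B, cmp Y (th B) (p2 Y A B))),
         tup = (\<lambda>(D, A, f) (D', B, g). (D, prd Y A B, cmp Y (omi A B) (tup Y f g))),
         Dif = (\<lambda>(A, B, f). (prd Y A A, B, Dif Y f)) \<rparr>)"

definition G_theta :: "('o,'a,'k,'m) cdc_scheme \<Rightarrow> ('a \<Rightarrow> 'a) \<Rightarrow> ('o \<Rightarrow> 'a) \<Rightarrow>
    'a \<Rightarrow> 'o \<times> 'o \<times> 'a" where
  "G_theta X Sa th f = (dm X f, cd X f, cmp X (Sa f) (th (dm X f)))"

definition G_theta_inv :: "('o,'a,'k,'m) cdc_scheme \<Rightarrow> ('o \<Rightarrow> 'a) \<Rightarrow>
    'o \<times> 'o \<times> 'a \<Rightarrow> 'a" where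
  "G_theta_inv X eps = (\<lambda>(A, B, f). cmp X (eps B) f)"

end

theory Submission
  imports Defs
begin

locale cdcl =
  fixes C :: "('o,'a,'k::comm_semiring_1,'m) cdc_scheme"
  assumes cdc: "cart_diff_cat C"
begin

lemma cl: "cart_left_klinear C" using cdc unfolding cart_diff_cat_def by blast
lemma lk: "left_klinear C" using cl unfolding cart_left_klinear_def by blast
lemma cat: "category C" using lk unfolding left_klinear_def by blast
lemma hp: "has_products C" using cl unfolding cart_left_klinear_def by blast

lemma arr_dm[simp]: "f \<in> arr C \<Longrightarrow> dm C f \<in> obj C"
  using cat unfolding category_def by blast
lemma arr_cd[simp]: "f \<in> arr C \<Longrightarrow> cd C f \<in> obj C"
  using cat unfolding category_def by blast

lemma ident_t[simp]: "A \<in> obj C \<Longrightarrow> ident C A \<in> arr C"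
  "A \<in> obj C \<Longrightarrow> dm C (ident C A) = A"
  "A \<in> obj C \<Longrightarrow> cd C (ident C A) = A"
  using cat unfolding category_def hom_def by blast+

lemma cmp_t[simp]: "f \<in> arr C \<Longrightarrow> g \<in> arr C \<Longrightarrow> dm C g = cd C f \<Longrightarrow> cmp C g f \<in> arr C"
  "f \<in> arr C \<Longrightarrow> g \<in> arr C \<Longrightarrow> dm C g = cd C f \<Longrightarrow> dm C (cmp C g f) = dm C f"
  "f \<in> arr C \<Longrightarrow> g \<in> arr C \<Longrightarrow> dm C g = cd C f \<Longrightarrow> cd C (cmp C g f) = cd C g"
proof -
  assume a: "f \<in> arr C" "g \<in> arr C" "dm C g = cd C f"
  have "f \<in> hom C (dm C f) (cd C f)" "g \<in> hom C (cd C f) (cd C g)" using a by (auto simp: hom_def)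
  then have "cmp C g f \<in> hom C (dm C f) (cd C g)" using cat unfolding category_def by blast
  then show "cmp C g f \<in> arr C" "dm C (cmp C g f) = dm C f" "cd C (cmp C g f) = cd C g"
    by (auto simp: hom_def)
qed

lemma idl[simp]: "f \<in> arr C \<Longrightarrow> B = cd C f \<Longrightarrow> cmp C (ident C B) f = f"
  using cat unfolding category_def hom_def by blast
lemma idr[simp]: "f \<in> arr C \<Longrightarrow> A = dm C f \<Longrightarrow> cmp C f (ident C A) = f"
  using cat unfolding category_def hom_def by blast

lemma assoc[simp]: "f \<in> arr C \<Longrightarrow> g \<in> arr C \<Longrightarrow> h \<in> arr C \<Longrightarrow> dm C g = cd C f \<Longrightarrow>
   dm C h = cd C g \<Longrightarrow> cmp C (cmp C h g) f = cmp C h (cmp C g f)"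
proof -
  assume a: "f \<in> arr C" "g \<in> arr C" "h \<in> arr C" "dm C g = cd C f" "dm C h = cd C g"
  have "f \<in> hom C (dm C f) (cd C f)" "g \<in> hom C (cd C f) (cd C g)" "h \<in> hom C (cd C g) (cd C h)"
    using a by (auto simp: hom_def)
  then show ?thesis using cat unfolding category_def by metis
qed

lemma zr_t[simp]: "A \<in> obj C \<Longrightarrow> B \<in> obj C \<Longrightarrow> zr C A B \<in> arr C"
  "A \<in> obj C \<Longrightarrow> B \<in> obj C \<Longrightarrow> dm C (zr C A B) = A"
  "A \<in> obj C \<Longrightarrow> B \<in> obj C \<Longrightarrow> cd C (zr C A B) = B"
  using lk unfolding left_klinear_def hom_def by blast+

lemma modl: "f \<in> hom C A B \<Longrightarrow> g \<in> hom C A B \<Longrightarrow> h \<in> hom C A B \<Longrightarrow>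
           pls C f g \<in> hom C A B \<and> smul C r f \<in> hom C A B \<and>
           pls C (pls C f g) h = pls C f (pls C g h) \<and>
           pls C f g = pls C g f \<and>
           pls C f (zr C A B) = f \<and>
           smul C r (pls C f g) = pls C (smul C r f) (smul C r g) \<and>
           smul C (r + s) f = pls C (smul C r f) (smul C s f) \<and>
           smul C (r * s) f = smul C r (smul C s f) \<and>
           smul C 1 f = f \<and>
           smul C 0 f = zr C A B \<and>
           smul C r (zr C A B) = zr C A B"
proof -
  assume a: "f \<in> hom C A B" "g \<in> hom C A B" "h \<in> hom C A B"
  then have "A \<in> obj C" "B \<in> obj C" by (auto simp: hom_def)
  with a show ?thesis using lk unfolding left_klinear_def by blast
qed

lemma modl':
  assumes "f \<in> arr C" "g \<in> arr C" "h \<in> arr C" "dm C g = dm C f" "cd C g = cd C f"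
     "dm C h = dm C f" "cd C h = cd C f"
  shows "pls C f g \<in> hom C (dm C f) (cd C f) \<and> smul C r f \<in> hom C (dm C f) (cd C f) \<and>
           pls C (pls C f g) h = pls C f (pls C g h) \<and>
           pls C f g = pls C g f \<and>
           pls C f (zr C (dm C f) (cd C f)) = f \<and>
           smul C r (pls C f g) = pls C (smul C r f) (smul C r g) \<and>
           smul C (r + s) f = pls C (smul C r f) (smul C s f) \<and>
           smul C (r * s) f = smul C r (smul C s f) \<and>
           smul C 1 f = f \<and>
           smul C 0 f = zr C (dm C f) (cd C f) \<and>
           smul C r (zr C (dm C f) (cd C f)) = zr C (dm C f) (cd C f)"
proof -
  have "f \<in> hom C (dm C f) (cd C f)" "g \<in> hom C (dm C f) (cd C f)" "h \<in> hom C (dm C f) (cd C f)"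
    using assms by (auto simp: hom_def)
  from modl[OF this] show ?thesis .
qed

lemma pls_t[simp]: "f \<in> arr C \<Longrightarrow> g \<in> arr C \<Longrightarrow> dm C g = dm C f \<Longrightarrow> cd C g = cd C f \<Longrightarrow> pls C f g \<in> arr C"
  "f \<in> arr C \<Longrightarrow> g \<in> arr C \<Longrightarrow> dm C g = dm C f \<Longrightarrow> cd C g = cd C f \<Longrightarrow> dm C (pls C f g) = dm C f"
  "f \<in> arr C \<Longrightarrow> g \<in> arr C \<Longrightarrow> dm C g = dm C f \<Longrightarrow> cd C g = cd C f \<Longrightarrow> cd C (pls C f g) = cd C f"
  using modl'[of f g f] unfolding hom_def by blast+

lemma smul_t[simp]: "f \<in> arr C \<Longrightarrow> smul C r f \<in> arr C"
  "f \<in> arr C \<Longrightarrow> dm C (smul C r f) = dm C f"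
  "f \<in> arr C \<Longrightarrow> cd C (smul C r f) = cd C f"
  using modl'[of f f f r] unfolding hom_def by blast+

lemma mod_eqs:
  assumes "f \<in> arr C" "g \<in> arr C" "h \<in> arr C" "dm C g = dm C f" "cd C g = cd C f"
     "dm C h = dm C f" "cd C h = cd C f"
  shows "pls C (pls C f g) h = pls C f (pls C g h)"
    "pls C f g = pls C g f"
    "smul C r (pls C f g) = pls C (smul C r f) (smul C r g)"
    "smul C (r + s) f = pls C (smul C r f) (smul C s f)"
    "smul C (r * s) f = smul C r (smul C s f)"
  using modl'[OF assms, of r s] by blast+

lemma pls_zr[simp]: "f \<in> arr C \<Longrightarrow> B = cd C f \<Longrightarrow> A = dm C f \<Longrightarrow> pls C f (zr C A B) = f"
  using modl'[of f f f] by blast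
lemma smul1[simp]: "f \<in> arr C \<Longrightarrow> smul C 1 f = f"
  using modl'[of f f f] by blast
lemma smul0[simp]: "f \<in> arr C \<Longrightarrow> smul C 0 f = zr C (dm C f) (cd C f)"
  using modl'[of f f f] by blast
lemma zr_pls[simp]: "f \<in> arr C \<Longrightarrow> B = cd C f \<Longrightarrow> A = dm C f \<Longrightarrow> pls C (zr C A B) f = f"
  using mod_eqs(2)[of f "zr C A B" f] pls_zr by simp

lemma smul_zr[simp]: "A \<in> obj C \<Longrightarrow> B \<in> obj C \<Longrightarrow> smul C r (zr C A B) = zr C A B"
  using modl[of "zr C A B" A B "zr C A B" "zr C A B" r] by (auto simp: hom_def)

lemma prelin: "f \<in> hom C B D \<Longrightarrow> g \<in> hom C B D \<Longrightarrow> x \<in> hom C A B \<Longrightarrow>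
        cmp C (pls C (smul C r f) (smul C s g)) x = pls C (smul C r (cmp C f x)) (smul C s (cmp C g x))"
  using lk unfolding left_klinear_def by blast

lemma cmp_pls[simp]: "f \<in> arr C \<Longrightarrow> g \<in> arr C \<Longrightarrow> x \<in> arr C \<Longrightarrow> dm C g = dm C f \<Longrightarrow> cd C g = cd C f \<Longrightarrow>
   dm C f = cd C x \<Longrightarrow> cmp C (pls C f g) x = pls C (cmp C f x) (cmp C g x)"
  using prelin[of f "dm C f" "cd C f" g x "dm C x" 1 1] by (simp add: hom_def)

lemma cmp_zr[simp]: "x \<in> arr C \<Longrightarrow> B = cd C x \<Longrightarrow> D \<in> obj C \<Longrightarrow> cmp C (zr C B D) x = zr C (dm C x) D"
proof -
  assume a: "x \<in> arr C" "B = cd C x" "D \<in> obj C"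
  have "cmp C (pls C (smul C 0 (zr C B D)) (smul C 0 (zr C B D))) x
     = pls C (smul C 0 (cmp C (zr C B D) x)) (smul C 0 (cmp C (zr C B D) x))"
    using a by (intro prelin) (auto simp: hom_def)
  then show ?thesis using a by simp
qed

lemma cmp_smul[simp]: "f \<in> arr C \<Longrightarrow> x \<in> arr C \<Longrightarrow> dm C f = cd C x \<Longrightarrow> cmp C (smul C r f) x = smul C r (cmp C f x)"
proof -
  assume a: "f \<in> arr C" "x \<in> arr C" "dm C f = cd C x"
  have "cmp C (pls C (smul C r f) (smul C 0 f)) x = pls C (smul C r (cmp C f x)) (smul C 0 (cmp C f x))"
    using a by (intro prelin) (auto simp: hom_def)
  then show ?thesis using a by simp
qed

lemma trm_obj[simp]: "trm C \<in> obj C" using hp unfolding has_products_def by blast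
lemma bng_t[simp]: "A \<in> obj C \<Longrightarrow> bng C A \<in> arr C" "A \<in> obj C \<Longrightarrow> dm C (bng C A) = A"
   "A \<in> obj C \<Longrightarrow> cd C (bng C A) = trm C"
  using hp unfolding has_products_def hom_def by blast+
lemma bng_uniq: "f \<in> arr C \<Longrightarrow> cd C f = trm C \<Longrightarrow> f = bng C (dm C f)"
  using hp unfolding has_products_def hom_def by auto
lemma prd_obj[simp]: "A \<in> obj C \<Longrightarrow> B \<in> obj C \<Longrightarrow> prd C A B \<in> obj C"
  using hp unfolding has_products_def by blast
lemma p1_t[simp]: "A \<in> obj C \<Longrightarrow> B \<in> obj C \<Longrightarrow> p1 C A B \<in> arr C"
  "A \<in> obj C \<Longrightarrow> B \<in> obj C \<Longrightarrow> dm C (p1 C A B) = prd C A B"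
  "A \<in> obj C \<Longrightarrow> B \<in> obj C \<Longrightarrow> cd C (p1 C A B) = A"
  using hp unfolding has_products_def hom_def by blast+
lemma p2_t[simp]: "A \<in> obj C \<Longrightarrow> B \<in> obj C \<Longrightarrow> p2 C A B \<in> arr C"
  "A \<in> obj C \<Longrightarrow> B \<in> obj C \<Longrightarrow> dm C (p2 C A B) = prd C A B"
  "A \<in> obj C \<Longrightarrow> B \<in> obj C \<Longrightarrow> cd C (p2 C A B) = B"
  using hp unfolding has_products_def hom_def by blast+

lemma tup_all: "f \<in> arr C \<Longrightarrow> g \<in> arr C \<Longrightarrow> dm C g = dm C f \<Longrightarrow>
   tup C f g \<in> hom C (dm C f) (prd C (cd C f) (cd C g)) \<and>
   cmp C (p1 C (cd C f) (cd C g)) (tup C f g) = f \<and> cmp C (p2 C (cd C f) (cd C g)) (tup C f g) = g"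
proof -
  assume a: "f \<in> arr C" "g \<in> arr C" "dm C g = dm C f"
  then have "f \<in> hom C (dm C f) (cd C f)" "g \<in> hom C (dm C f) (cd C g)" "cd C f \<in> obj C" "cd C g \<in> obj C"
    by (auto simp: hom_def)
  then show ?thesis using hp unfolding has_products_def by blast
qed

lemma tup_t[simp]: "f \<in> arr C \<Longrightarrow> g \<in> arr C \<Longrightarrow> dm C g = dm C f \<Longrightarrow> tup C f g \<in> arr C"
  "f \<in> arr C \<Longrightarrow> g \<in> arr C \<Longrightarrow> dm C g = dm C f \<Longrightarrow> dm C (tup C f g) = dm C f"
  "f \<in> arr C \<Longrightarrow> g \<in> arr C \<Longrightarrow> dm C g = dm C f \<Longrightarrow> cd C (tup C f g) = prd C (cd C f) (cd C g)"
  using tup_all unfolding hom_def by blast+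

lemma p1_tup[simp]: "f \<in> arr C \<Longrightarrow> g \<in> arr C \<Longrightarrow> dm C g = dm C f \<Longrightarrow> A = cd C f \<Longrightarrow> B = cd C g \<Longrightarrow>
   cmp C (p1 C A B) (tup C f g) = f"
  using tup_all by blast
lemma p2_tup[simp]: "f \<in> arr C \<Longrightarrow> g \<in> arr C \<Longrightarrow> dm C g = dm C f \<Longrightarrow> A = cd C f \<Longrightarrow> B = cd C g \<Longrightarrow>
   cmp C (p2 C A B) (tup C f g) = g"
  using tup_all by blast

lemma p1_tup'[simp]: "f \<in> arr C \<Longrightarrow> g \<in> arr C \<Longrightarrow> dm C g = dm C f \<Longrightarrow> A = cd C f \<Longrightarrow> B = cd C g \<Longrightarrow>
   x \<in> arr C \<Longrightarrow> cd C x = dm C f \<Longrightarrow> cmp C (p1 C A B) (cmp C (tup C f g) x) = cmp C f x"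
  by (metis arr_cd assoc p1_t p1_tup tup_t)
lemma p2_tup'[simp]: "f \<in> arr C \<Longrightarrow> g \<in> arr C \<Longrightarrow> dm C g = dm C f \<Longrightarrow> A = cd C f \<Longrightarrow> B = cd C g \<Longrightarrow>
   x \<in> arr C \<Longrightarrow> cd C x = dm C f \<Longrightarrow> cmp C (p2 C A B) (cmp C (tup C f g) x) = cmp C g x"
  by (metis arr_cd assoc p2_t p2_tup tup_t)

lemma tup_eta: "h \<in> arr C \<Longrightarrow> A \<in> obj C \<Longrightarrow> B \<in> obj C \<Longrightarrow> cd C h = prd C A B \<Longrightarrow>
   tup C (cmp C (p1 C A B) h) (cmp C (p2 C A B) h) = h"
  using hp unfolding has_products_def hom_def by blast

lemma tup_eq_iff: "f \<in> arr C \<Longrightarrow> g \<in> arr C \<Longrightarrow> dm C g = dm C f \<Longrightarrow>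
  f' \<in> arr C \<Longrightarrow> g' \<in> arr C \<Longrightarrow> dm C g' = dm C f' \<Longrightarrow> cd C f' = cd C f \<Longrightarrow> cd C g' = cd C g \<Longrightarrow>
  (tup C f g = tup C f' g') = (f = f' \<and> g = g')"
  by (metis p1_tup p2_tup)

lemma tup_p12[simp]: "A \<in> obj C \<Longrightarrow> B \<in> obj C \<Longrightarrow> tup C (p1 C A B) (p2 C A B) = ident C (prd C A B)"
  using tup_eta[of "ident C (prd C A B)" A B] by simp

lemma cmp_tup[simp]: "f \<in> arr C \<Longrightarrow> g \<in> arr C \<Longrightarrow> dm C g = dm C f \<Longrightarrow> h \<in> arr C \<Longrightarrow> cd C h = dm C f \<Longrightarrow>
   cmp C (tup C f g) h = tup C (cmp C f h) (cmp C g h)"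
proof -
  assume a: "f \<in> arr C" "g \<in> arr C" "dm C g = dm C f" "h \<in> arr C" "cd C h = dm C f"
  have "tup C (cmp C (p1 C (cd C f) (cd C g)) (cmp C (tup C f g) h)) (cmp C (p2 C (cd C f) (cd C g)) (cmp C (tup C f g) h))
     = cmp C (tup C f g) h"
    using a by (intro tup_eta) auto
  then show ?thesis using a by simp
qed

lemma p1_lin: "A \<in> obj C \<Longrightarrow> B \<in> obj C \<Longrightarrow> klinear_map C (p1 C A B)"
  using cl unfolding cart_left_klinear_def by blast
lemma p2_lin: "A \<in> obj C \<Longrightarrow> B \<in> obj C \<Longrightarrow> klinear_map C (p2 C A B)"
  using cl unfolding cart_left_klinear_def by blast

lemma dif_all: "A \<in> obj C \<Longrightarrow> B \<in> obj C \<Longrightarrow>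
     (\<forall>f \<in> hom C A B. Dif C f \<in> hom C (prd C A A) B) \<and>
     (\<forall>f \<in> hom C A B. \<forall>g \<in> hom C A B. \<forall>r s.
        Dif C (pls C (smul C r f) (smul C s g)) = pls C (smul C r (Dif C f)) (smul C s (Dif C g))) \<and>
     (\<forall>f \<in> hom C A B. \<forall>r s.
        (let AA = prd C A A; T = prd C A AA;
             q1 = p1 C A AA; q2 = cmp C (p1 C A A) (p2 C A AA); q3 = cmp C (p2 C A A) (p2 C A AA)
         in cmp C (Dif C f) (tup C q1 (pls C (smul C r q2) (smul C s q3)))
            = pls C (smul C r (cmp C (Dif C f) (tup C q1 q2))) (smul C s (cmp C (Dif C f) (tup C q1 q3))))) \<and>
     Dif C (ident C A) = p2 C A A \<and>
     Dif C (p1 C A B) = cmp C (p1 C A B) (p2 C (prd C A B) (prd C A B)) \<and>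
     Dif C (p2 C A B) = cmp C (p2 C A B) (p2 C (prd C A B) (prd C A B)) \<and>
     Dif C (bng C A) = bng C (prd C A A) \<and>
     (\<forall>D. D \<in> obj C \<longrightarrow> (\<forall>f \<in> hom C A B. \<forall>g \<in> hom C A D.
        Dif C (tup C f g) = tup C (Dif C f) (Dif C g))) \<and>
     (\<forall>D. D \<in> obj C \<longrightarrow> (\<forall>f \<in> hom C A B. \<forall>g \<in> hom C B D.
        Dif C (cmp C g f) = cmp C (Dif C g) (tup C (cmp C f (p1 C A A)) (Dif C f))))"
  using cdc unfolding cart_diff_cat_def by blast

lemma dif_t[simp]: "f \<in> arr C \<Longrightarrow> Dif C f \<in> arr C"
  "f \<in> arr C \<Longrightarrow> dm C (Dif C f) = prd C (dm C f) (dm C f)"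
  "f \<in> arr C \<Longrightarrow> cd C (Dif C f) = cd C f"
  using dif_all[of "dm C f" "cd C f"] unfolding hom_def by auto

lemma dif_lin: "f \<in> arr C \<Longrightarrow> g \<in> arr C \<Longrightarrow> dm C g = dm C f \<Longrightarrow> cd C g = cd C f \<Longrightarrow>
   Dif C (pls C (smul C r f) (smul C s g)) = pls C (smul C r (Dif C f)) (smul C s (Dif C g))"
  using dif_all[of "dm C f" "cd C f"] unfolding hom_def by auto

lemma dif_cd2: "f \<in> arr C \<Longrightarrow> A = dm C f \<Longrightarrow>
   (let AA = prd C A A; T = prd C A AA;
             q1 = p1 C A AA; q2 = cmp C (p1 C A A) (p2 C A AA); q3 = cmp C (p2 C A A) (p2 C A AA)
         in cmp C (Dif C f) (tup C q1 (pls C (smul C r q2) (smul C s q3)))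
            = pls C (smul C r (cmp C (Dif C f) (tup C q1 q2))) (smul C s (cmp C (Dif C f) (tup C q1 q3))))"
  using dif_all[of "dm C f" "cd C f"] unfolding hom_def by auto

lemma dif_id[simp]: "A \<in> obj C \<Longrightarrow> Dif C (ident C A) = p2 C A A"
  using dif_all[of A A] by blast
lemma dif_p1[simp]: "A \<in> obj C \<Longrightarrow> B \<in> obj C \<Longrightarrow> Dif C (p1 C A B) = cmp C (p1 C A B) (p2 C (prd C A B) (prd C A B))"
  using dif_all[of A B] by blast
lemma dif_p2[simp]: "A \<in> obj C \<Longrightarrow> B \<in> obj C \<Longrightarrow> Dif C (p2 C A B) = cmp C (p2 C A B) (p2 C (prd C A B) (prd C A B))"
  using dif_all[of A B] by blast
lemma dif_bng[simp]: "A \<in> obj C \<Longrightarrow> Dif C (bng C A) = bng C (prd C A A)"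
  using dif_all[of A A] by blast
lemma dif_tup[simp]: "f \<in> arr C \<Longrightarrow> g \<in> arr C \<Longrightarrow> dm C g = dm C f \<Longrightarrow> Dif C (tup C f g) = tup C (Dif C f) (Dif C g)"
proof -
  assume a: "f \<in> arr C" "g \<in> arr C" "dm C g = dm C f"
  then have "f \<in> hom C (dm C f) (cd C f)" "g \<in> hom C (dm C f) (cd C g)" "cd C g \<in> obj C" "dm C f \<in> obj C" "cd C f \<in> obj C"
    by (auto simp: hom_def)
  then show ?thesis using dif_all[of "dm C f" "cd C f"] by blast
qed
lemma dif_cmp: "f \<in> arr C \<Longrightarrow> g \<in> arr C \<Longrightarrow> dm C g = cd C f \<Longrightarrow> A = dm C f \<Longrightarrow>
   Dif C (cmp C g f) = cmp C (Dif C g) (tup C (cmp C f (p1 C A A)) (Dif C f))"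
proof -
  assume a: "f \<in> arr C" "g \<in> arr C" "dm C g = cd C f" "A = dm C f"
  then have "f \<in> hom C (dm C f) (cd C f)" "g \<in> hom C (cd C f) (cd C g)" "cd C g \<in> obj C" "dm C f \<in> obj C" "cd C f \<in> obj C"
    by (auto simp: hom_def)
  then show ?thesis using dif_all[of "dm C f" "cd C f"] a(4) by blast
qed

lemma Dlin_klin:
  assumes f: "f \<in> arr C" "D_linear C f" and x: "x \<in> arr C" "y \<in> arr C" "dm C y = dm C x"
    "cd C x = dm C f" "cd C y = dm C f"
  shows "cmp C f (pls C (smul C r x) (smul C s y)) = pls C (smul C r (cmp C f x)) (smul C s (cmp C f y))"
proof -
  define A where "A = dm C f"
  have A: "A \<in> obj C" using f A_def by simp
  have Ae: "dm C f = A" using A_def by simp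
  have e: "cmp C (Dif C f) (tup C (p1 C A (prd C A A)) (pls C (smul C r (cmp C (p1 C A A) (p2 C A (prd C A A)))) (smul C s (cmp C (p2 C A A) (p2 C A (prd C A A))))))
        = pls C (smul C r (cmp C (Dif C f) (tup C (p1 C A (prd C A A)) (cmp C (p1 C A A) (p2 C A (prd C A A))))))
               (smul C s (cmp C (Dif C f) (tup C (p1 C A (prd C A A)) (cmp C (p2 C A A) (p2 C A (prd C A A))))))"
    using dif_cd2[OF f(1) A_def] by (simp add: Let_def)
  define h where "h = tup C x (tup C x y)"
  have h: "h \<in> arr C" "dm C h = dm C x" "cd C h = prd C A (prd C A A)" using x Ae by (auto simp: h_def)
  have df: "Dif C f = cmp C f (p2 C A A)" using f(2) A_def unfolding D_linear_def by simp
  have "cmp C (cmp C (Dif C f) (tup C (p1 C A (prd C A A)) (pls C (smul C r (cmp C (p1 C A A) (p2 C A (prd C A A)))) (smul C s (cmp C (p2 C A A) (p2 C A (prd C A A))))))) h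
     = cmp C (pls C (smul C r (cmp C (Dif C f) (tup C (p1 C A (prd C A A)) (cmp C (p1 C A A) (p2 C A (prd C A A))))))
               (smul C s (cmp C (Dif C f) (tup C (p1 C A (prd C A A)) (cmp C (p2 C A A) (p2 C A (prd C A A))))))) h"
    using e by simp
  have q1: "cmp C (p1 C A (prd C A A)) h = x" using x f A Ae by (simp add: h_def)
  have L: "cmp C (cmp C (Dif C f) (tup C (p1 C A (prd C A A)) (pls C (smul C r (cmp C (p1 C A A) (p2 C A (prd C A A)))) (smul C s (cmp C (p2 C A A) (p2 C A (prd C A A))))))) h
       = cmp C (Dif C f) (tup C x (pls C (smul C r x) (smul C s y)))"
    using h A f x Ae by (simp add: q1 h_def)
  have R: "cmp C (pls C (smul C r (cmp C (Dif C f) (tup C (p1 C A (prd C A A)) (cmp C (p1 C A A) (p2 C A (prd C A A))))))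
               (smul C s (cmp C (Dif C f) (tup C (p1 C A (prd C A A)) (cmp C (p2 C A A) (p2 C A (prd C A A))))))) h
     = pls C (smul C r (cmp C (Dif C f) (tup C x x))) (smul C s (cmp C (Dif C f) (tup C x y)))"
    using h A f x Ae by (simp add: q1 h_def)
  have dz: "\<And>z. z \<in> arr C \<Longrightarrow> dm C z = dm C x \<Longrightarrow> cd C z = A \<Longrightarrow> cmp C (Dif C f) (tup C x z) = cmp C f z"
    using df A f x Ae by simp
  have "cmp C f (pls C (smul C r x) (smul C s y)) = cmp C (Dif C f) (tup C x (pls C (smul C r x) (smul C s y)))"
    using dz x Ae f by simp
  also have "\<dots> = pls C (smul C r (cmp C (Dif C f) (tup C x x))) (smul C s (cmp C (Dif C f) (tup C x y)))"
    using L R e by simp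
  also have "\<dots> = pls C (smul C r (cmp C f x)) (smul C s (cmp C f y))"
    using dz x Ae by simp
  finally show ?thesis .
qed

end

context cdcl
begin

lemma bng_uniq': "f \<in> hom C A (trm C) \<Longrightarrow> f = bng C A"
  using bng_uniq unfolding hom_def by auto

lemma cdc_body: "A \<in> obj C \<Longrightarrow> B \<in> obj C \<Longrightarrow>
     (\<forall>f \<in> hom C A B. Dif C f \<in> hom C (prd C A A) B) \<and>
     (\<forall>f \<in> hom C A B. \<forall>g \<in> hom C A B. \<forall>r s.
        Dif C (pls C (smul C r f) (smul C s g)) = pls C (smul C r (Dif C f)) (smul C s (Dif C g))) \<and>
     (\<forall>f \<in> hom C A B. \<forall>r s.
        (let AA = prd C A A; T = prd C A AA;
             q1 = p1 C A AA; q2 = cmp C (p1 C A A) (p2 C A AA); q3 = cmp C (p2 C A A) (p2 C A AA)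
         in cmp C (Dif C f) (tup C q1 (pls C (smul C r q2) (smul C s q3)))
            = pls C (smul C r (cmp C (Dif C f) (tup C q1 q2))) (smul C s (cmp C (Dif C f) (tup C q1 q3))))) \<and>
     Dif C (ident C A) = p2 C A A \<and>
     Dif C (p1 C A B) = cmp C (p1 C A B) (p2 C (prd C A B) (prd C A B)) \<and>
     Dif C (p2 C A B) = cmp C (p2 C A B) (p2 C (prd C A B) (prd C A B)) \<and>
     Dif C (bng C A) = bng C (prd C A A) \<and>
     (\<forall>D. D \<in> obj C \<longrightarrow> (\<forall>f \<in> hom C A B. \<forall>g \<in> hom C A D.
        Dif C (tup C f g) = tup C (Dif C f) (Dif C g))) \<and>
     (\<forall>D. D \<in> obj C \<longrightarrow> (\<forall>f \<in> hom C A B. \<forall>g \<in> hom C B D.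
        Dif C (cmp C g f) = cmp C (Dif C g) (tup C (cmp C f (p1 C A A)) (Dif C f)))) \<and>
     (\<forall>f \<in> hom C A B.
        (let Q = prd C A A in
          cmp C (Dif C (Dif C f))
             (tup C (tup C (p1 C A A) (zr C Q A)) (tup C (zr C Q A) (p2 C A A))) = Dif C f \<and>
          (let x1 = cmp C (p1 C A A) (p1 C Q Q); x2 = cmp C (p2 C A A) (p1 C Q Q);
               x3 = cmp C (p1 C A A) (p2 C Q Q); x4 = cmp C (p2 C A A) (p2 C Q Q) in
           cmp C (Dif C (Dif C f)) (tup C (tup C x1 x2) (tup C x3 x4))
             = cmp C (Dif C (Dif C f)) (tup C (tup C x1 x3) (tup C x2 x4)))))"
  using cdc unfolding cart_diff_cat_def by blast

lemmas cb1 = cdc_body[THEN conjunct1]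
lemmas cb2 = cdc_body[THEN conjunct2, THEN conjunct1]
lemmas cb3 = cdc_body[THEN conjunct2, THEN conjunct2, THEN conjunct1]
lemmas cb8 = cdc_body[THEN conjunct2, THEN conjunct2, THEN conjunct2, THEN conjunct2, THEN conjunct2,
   THEN conjunct2, THEN conjunct2, THEN conjunct1]
lemmas cb9 = cdc_body[THEN conjunct2, THEN conjunct2, THEN conjunct2, THEN conjunct2, THEN conjunct2,
   THEN conjunct2, THEN conjunct2, THEN conjunct2, THEN conjunct1]
lemmas cb10 = cdc_body[THEN conjunct2, THEN conjunct2, THEN conjunct2, THEN conjunct2, THEN conjunct2,
   THEN conjunct2, THEN conjunct2, THEN conjunct2, THEN conjunct2]

lemma sub_cdc:
  assumes Pid: "\<And>A. A \<in> obj C \<Longrightarrow> P (ident C A)"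
    and Pcmp: "\<And>f g. f \<in> arr C \<Longrightarrow> g \<in> arr C \<Longrightarrow> dm C g = cd C f \<Longrightarrow> P f \<Longrightarrow> P g \<Longrightarrow> P (cmp C g f)"
    and Pzr: "\<And>A B. A \<in> obj C \<Longrightarrow> B \<in> obj C \<Longrightarrow> P (zr C A B)"
    and Psmul: "\<And>f r. f \<in> arr C \<Longrightarrow> P f \<Longrightarrow> P (smul C r f)"
    and Ppls: "\<And>f g. f \<in> arr C \<Longrightarrow> g \<in> arr C \<Longrightarrow> dm C g = dm C f \<Longrightarrow> cd C g = cd C f \<Longrightarrow> P f \<Longrightarrow> P g \<Longrightarrow> P (pls C f g)"
    and Pbng: "\<And>A. A \<in> obj C \<Longrightarrow> P (bng C A)"
    and Pp1: "\<And>A B. A \<in> obj C \<Longrightarrow> B \<in> obj C \<Longrightarrow> P (p1 C A B)"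
    and Pp2: "\<And>A B. A \<in> obj C \<Longrightarrow> B \<in> obj C \<Longrightarrow> P (p2 C A B)"
    and Ptup: "\<And>f g. f \<in> arr C \<Longrightarrow> g \<in> arr C \<Longrightarrow> dm C g = dm C f \<Longrightarrow> P f \<Longrightarrow> P g \<Longrightarrow> P (tup C f g)"
    and PDif: "\<And>f. f \<in> arr C \<Longrightarrow> P f \<Longrightarrow> P (Dif C f)"
  shows "cart_diff_cat (C\<lparr>arr := {f \<in> arr C. P f}\<rparr>)"
proof -
  let ?Y = "C\<lparr>arr := {f \<in> arr C. P f}\<rparr>"
  have hY: "hom ?Y A B = {f \<in> hom C A B. P f}" for A B by (auto simp: hom_def)
  have e1: "pls ?Y = pls C" "smul ?Y = smul C" "zr ?Y = zr C" "cmp ?Y = cmp C" "tup ?Y = tup C" "Dif ?Y = Dif C"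
    "p1 ?Y = p1 C" "p2 ?Y = p2 C" "bng ?Y = bng C" "trm ?Y = trm C" "prd ?Y = prd C" "dm ?Y = dm C" "cd ?Y = cd C"
    "obj ?Y = obj C" "ident ?Y = ident C" by simp_all
  have c: "category ?Y"
    unfolding category_def hY by (auto simp: hom_def Pid Pcmp)
  have l: "left_klinear ?Y"
    unfolding left_klinear_def hY e1
    apply (intro conjI allI impI ballI)
    apply (rule c)
    apply (simp_all only: mem_Collect_eq)
    apply (auto simp only: )
    apply (((simp add: hom_def Pzr Psmul Ppls; fail) | (blast dest: modl prelin))+)
    done
  show ?thesis
    unfolding cart_diff_cat_def cart_left_klinear_def has_products_def klinear_map_def hY e1
    apply (intro conjI allI impI ballI)
    apply (rule l)
    apply (simp_all only: mem_Collect_eq)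
    apply (auto simp only: )
    apply (((simp add: hom_def Pzr Psmul Ppls Pbng Pp1 Pp2 Ptup PDif; fail)
       | (simp add: bng_uniq'; fail)
       | (simp add: hom_def tup_eta; fail)
       | (simp add: dif_cmp hom_def; fail))+)?
    subgoal for A B Aa x y r s using p1_lin[of A B] by (simp add: klinear_map_def)
    subgoal for A B Aa x y r s using p2_lin[of A B] by (simp add: klinear_map_def)
    subgoal for A B f using cb1[of A B] by blast
    subgoal for A B f by (simp add: hom_def PDif)
    subgoal for A B f g r s using cb2[of A B] by blast
    subgoal for A B f r s using cb3[of A B] by blast
    subgoal by simp
    subgoal by simp
    subgoal by simp
    subgoal by simp
    subgoal for A B D f g using cb8[of A B] by blast
    subgoal for A B D f g using cb9[of A B] by blast
    subgoal for A B f using cb10[of A B] by blast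
    done
qed

end

context cdcl
begin

lemma p1_lin': "x \<in> arr C \<Longrightarrow> y \<in> arr C \<Longrightarrow> dm C y = dm C x \<Longrightarrow> cd C x = prd C A B \<Longrightarrow> cd C y = prd C A B \<Longrightarrow>
  A \<in> obj C \<Longrightarrow> B \<in> obj C \<Longrightarrow>
  cmp C (p1 C A B) (pls C (smul C r x) (smul C s y)) = pls C (smul C r (cmp C (p1 C A B) x)) (smul C s (cmp C (p1 C A B) y))"
  using p1_lin[of A B] unfolding klinear_map_def hom_def by simp
lemma p2_lin': "x \<in> arr C \<Longrightarrow> y \<in> arr C \<Longrightarrow> dm C y = dm C x \<Longrightarrow> cd C x = prd C A B \<Longrightarrow> cd C y = prd C A B \<Longrightarrow>
  A \<in> obj C \<Longrightarrow> B \<in> obj C \<Longrightarrow>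
  cmp C (p2 C A B) (pls C (smul C r x) (smul C s y)) = pls C (smul C r (cmp C (p2 C A B) x)) (smul C s (cmp C (p2 C A B) y))"
  using p2_lin[of A B] unfolding klinear_map_def hom_def by simp
lemma cd67: "f \<in> arr C \<Longrightarrow> A = dm C f \<Longrightarrow> (let Q = prd C A A in
          cmp C (Dif C (Dif C f))
             (tup C (tup C (p1 C A A) (zr C Q A)) (tup C (zr C Q A) (p2 C A A))) = Dif C f \<and>
          (let x1 = cmp C (p1 C A A) (p1 C Q Q); x2 = cmp C (p2 C A A) (p1 C Q Q);
               x3 = cmp C (p1 C A A) (p2 C Q Q); x4 = cmp C (p2 C A A) (p2 C Q Q) in
           cmp C (Dif C (Dif C f)) (tup C (tup C x1 x2) (tup C x3 x4))
             = cmp C (Dif C (Dif C f)) (tup C (tup C x1 x3) (tup C x2 x4))))"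
  using cb10[of "dm C f" "cd C f"] unfolding hom_def by auto
lemmas dif_cd2' = dif_cd2[unfolded Let_def, OF _ refl]
lemmas cd67' = cd67[unfolded Let_def, OF _ refl]

lemma transport_cdc:
  fixes E :: "('o,'b,'k,'n) cdc_scheme" and F :: "'a \<Rightarrow> 'b"
  assumes Eobj: "obj E = obj C" and Etrm: "trm E = trm C" and Eprd: "prd E = prd C"
    and arrE: "arr E = F ` arr C"
    and Fdm: "\<And>f. f \<in> arr C \<Longrightarrow> dm E (F f) = dm C f"
    and Fcd: "\<And>f. f \<in> arr C \<Longrightarrow> cd E (F f) = cd C f"
    and inj: "inj_on F (arr C)"
    and Fid: "\<And>A. A \<in> obj C \<Longrightarrow> ident E A = F (ident C A)"
    and Fcmp: "\<And>f g. f \<in> arr C \<Longrightarrow> g \<in> arr C \<Longrightarrow> dm C g = cd C f \<Longrightarrow> cmp E (F g) (F f) = F (cmp C g f)"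
    and Fsmul: "\<And>f r. f \<in> arr C \<Longrightarrow> smul E r (F f) = F (smul C r f)"
    and Fpls: "\<And>f g. f \<in> arr C \<Longrightarrow> g \<in> arr C \<Longrightarrow> dm C g = dm C f \<Longrightarrow> cd C g = cd C f \<Longrightarrow> pls E (F f) (F g) = F (pls C f g)"
    and Fzr: "\<And>A B. A \<in> obj C \<Longrightarrow> B \<in> obj C \<Longrightarrow> zr E A B = F (zr C A B)"
    and Fbng: "\<And>A. A \<in> obj C \<Longrightarrow> bng E A = F (bng C A)"
    and Fp1: "\<And>A B. A \<in> obj C \<Longrightarrow> B \<in> obj C \<Longrightarrow> p1 E A B = F (p1 C A B)"
    and Fp2: "\<And>A B. A \<in> obj C \<Longrightarrow> B \<in> obj C \<Longrightarrow> p2 E A B = F (p2 C A B)"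
    and Ftup: "\<And>f g. f \<in> arr C \<Longrightarrow> g \<in> arr C \<Longrightarrow> dm C g = dm C f \<Longrightarrow> tup E (F f) (F g) = F (tup C f g)"
    and FDif: "\<And>f. f \<in> arr C \<Longrightarrow> Dif E (F f) = F (Dif C f)"
  shows "cart_diff_cat E"
proof -
  have homE: "P" if "f \<in> hom E A B" "\<And>f0. f = F f0 \<Longrightarrow> f0 \<in> hom C A B \<Longrightarrow> P" for f A B P
    using that arrE Fdm Fcd unfolding hom_def by auto
  have arrEE: "P" if "f \<in> arr E" "\<And>f0. f = F f0 \<Longrightarrow> f0 \<in> arr C \<Longrightarrow> P" for f P
    using that arrE by auto
  have Fhom: "(F x \<in> hom E A B) = (x \<in> hom C A B)" if "x \<in> arr C" for x A B
    using that arrE Fdm Fcd unfolding hom_def by auto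
  have Finj: "(F x = F y) = (x = y)" if "x \<in> arr C" "y \<in> arr C" for x y
    using inj that by (meson inj_on_contraD)
  have Farr: "F x \<in> arr E" if "x \<in> arr C" for x using that arrE by simp
  note FR = Farr Fid Fcmp Fsmul Fpls Fzr Fbng Fp1 Fp2 Ftup FDif Fhom Finj Fdm Fcd Eobj Etrm Eprd
  show ?thesis
    unfolding cart_diff_cat_def cart_left_klinear_def has_products_def klinear_map_def left_klinear_def
      category_def
    apply (intro conjI allI impI ballI)
    apply (safe elim!: homE arrEE)
    apply (simp_all add: FR hom_def Let_def)
    apply safe
    subgoal for f0 f0a f0b by (rule mod_eqs(1)) auto
    subgoal for f0 f0a f0b by (rule mod_eqs(2)[of f0 f0a f0]) auto
    subgoal for r f0 f0a f0b by (rule mod_eqs(3)[of f0 f0a f0]) auto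
    subgoal for r s f0 f0a f0b by (rule mod_eqs(4)[of f0 f0 f0]) auto
    subgoal for r s f0 f0a f0b by (rule mod_eqs(5)[of f0 f0 f0]) auto
    subgoal by (rule bng_uniq) auto
    subgoal by (rule tup_eta) auto
    subgoal by (rule p1_lin') auto
    subgoal by (rule p2_lin') auto
    subgoal by (rule dif_lin) auto
    subgoal using dif_cd2' by blast
    subgoal by (rule dif_cmp) auto
    subgoal using cd67' by blast
    subgoal using cd67' by blast
    done
qed

end

context cdcl
begin

lemma inv_uniq:
  assumes f: "f \<in> hom C A B" and g: "g \<in> hom C B A" "cmp C g f = ident C A" "cmp C f g = ident C B"
    and g': "g' \<in> hom C B A" "cmp C g' f = ident C A"
  shows "g' = g"
proof -
  have t: "f \<in> arr C" "dm C f = A" "cd C f = B" "g \<in> arr C" "dm C g = B" "cd C g = A" "g' \<in> arr C" "dm C g' = B" "cd C g' = A"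
    using f g g' unfolding hom_def by auto
  have 1: "cmp C g' (ident C B) = g'" by (rule idr) (use t in auto)
  have 2: "cmp C (ident C A) g = g" by (rule idl) (use t in auto)
  have 3: "cmp C (cmp C g' f) g = cmp C g' (cmp C f g)" by (rule assoc) (use t in auto)
  have "g' = cmp C g' (ident C B)" using 1 by (rule sym)
  also have "\<dots> = cmp C g' (cmp C f g)" by (simp only: g(3))
  also have "\<dots> = cmp C (cmp C g' f) g" using 3 by (rule sym)
  also have "\<dots> = cmp C (ident C A) g" by (simp only: g'(2))
  also have "\<dots> = g" by (rule 2)
  finally show ?thesis .
qed

lemma inv_arr_props:
  assumes iso: "is_iso C f A B"
  shows "inv_arr C f A B \<in> hom C B A" "cmp C (inv_arr C f A B) f = ident C A" "cmp C f (inv_arr C f A B) = ident C B"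
proof -
  obtain g where g: "g \<in> hom C B A" "cmp C g f = ident C A" "cmp C f g = ident C B"
    using iso unfolding is_iso_def by blast
  have f: "f \<in> hom C A B" using iso unfolding is_iso_def by blast
  have "inv_arr C f A B = g" unfolding inv_arr_def
  proof (rule the_equality)
    show "g \<in> hom C B A \<and> cmp C g f = ident C A \<and> cmp C f g = ident C B" using g by blast
  next
    fix x assume "x \<in> hom C B A \<and> cmp C x f = ident C A \<and> cmp C f x = ident C B"
    then show "x = g" using inv_uniq[OF f g, of x] by blast
  qed
  then show "inv_arr C f A B \<in> hom C B A" "cmp C (inv_arr C f A B) f = ident C A" "cmp C f (inv_arr C f A B) = ident C B"
    using g by auto
qed

lemma inv_arr_eqI:
  assumes f: "f \<in> hom C A B" and g: "g \<in> hom C B A" "cmp C g f = ident C A" "cmp C f g = ident C B"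
  shows "is_iso C f A B" "inv_arr C f A B = g"
proof -
  show i: "is_iso C f A B" using f g unfolding is_iso_def by blast
  show "inv_arr C f A B = g" unfolding inv_arr_def
  proof (rule the_equality)
    show "g \<in> hom C B A \<and> cmp C g f = ident C A \<and> cmp C f g = ident C B" using g by blast
  next
    fix x assume "x \<in> hom C B A \<and> cmp C x f = ident C A \<and> cmp C f x = ident C B"
    then show "x = g" using inv_uniq[OF f g, of x] by blast
  qed
qed

lemma ident_iso: "A \<in> obj C \<Longrightarrow> is_iso C (ident C A) A A"
  unfolding is_iso_def by (rule conjI, simp add: hom_def, rule bexI[of _ "ident C A"]) (auto simp: hom_def)

end

locale akl =
  fixes X :: "('o,'a,'k::comm_semiring_1,'m) cdc_scheme" and So :: "'o \<Rightarrow> 'o" and Sa :: "'a \<Rightarrow> 'a"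
    and eps :: "'o \<Rightarrow> 'a" and th :: "'o \<Rightarrow> 'a"
  assumes cdak: "cart_diff_abstract_kleisli X So Sa eps th"
begin

lemma cdcX: "cart_diff_cat X" using cdak unfolding cart_diff_abstract_kleisli_def by blast

sublocale cdcl X by unfold_locales (rule cdcX)

abbreviation thn where "thn f \<equiv> theta_natural X Sa th f"

lemma ak: "abstract_kleisli X So Sa eps th" using cdak unfolding cart_diff_abstract_kleisli_def by blast
lemma Sfun: "is_functor X X So Sa" using ak unfolding abstract_kleisli_def by blast
lemma sfun: "strong_cart_diff_functor X X So Sa" using cdak unfolding cart_diff_abstract_kleisli_def by blast
lemma slin: "strong_cart_klinear_functor X X So Sa" using sfun unfolding strong_cart_diff_functor_def by blast

lemma So_obj[simp]: "A \<in> obj X \<Longrightarrow> So A \<in> obj X" using Sfun unfolding is_functor_def by blast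
lemma Sa_t[simp]: "f \<in> arr X \<Longrightarrow> Sa f \<in> arr X" "f \<in> arr X \<Longrightarrow> dm X (Sa f) = So (dm X f)"
  "f \<in> arr X \<Longrightarrow> cd X (Sa f) = So (cd X f)"
  using Sfun unfolding is_functor_def hom_def by auto
lemma Sa_id[simp]: "A \<in> obj X \<Longrightarrow> Sa (ident X A) = ident X (So A)" using Sfun unfolding is_functor_def by blast
lemma Sa_cmp[simp]: "f \<in> arr X \<Longrightarrow> g \<in> arr X \<Longrightarrow> dm X g = cd X f \<Longrightarrow> Sa (cmp X g f) = cmp X (Sa g) (Sa f)"
  using Sfun unfolding is_functor_def hom_def by auto

lemma ak_all: "A \<in> obj X \<Longrightarrow> eps A \<in> hom X (So A) A \<and> th A \<in> hom X A (So A) \<and>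
        cmp X (eps A) (th A) = ident X A \<and>
        cmp X (eps (So A)) (Sa (th A)) = ident X (So A) \<and>
        cmp X (th (So A)) (th A) = cmp X (Sa (th A)) (th A)"
  using ak unfolding abstract_kleisli_def by blast

lemma eps_t[simp]: "A \<in> obj X \<Longrightarrow> eps A \<in> arr X" "A \<in> obj X \<Longrightarrow> dm X (eps A) = So A"
  "A \<in> obj X \<Longrightarrow> cd X (eps A) = A"
  using ak_all unfolding hom_def by auto
lemma th_t[simp]: "A \<in> obj X \<Longrightarrow> th A \<in> arr X" "A \<in> obj X \<Longrightarrow> dm X (th A) = A"
  "A \<in> obj X \<Longrightarrow> cd X (th A) = So A"
  using ak_all unfolding hom_def by auto
lemma eps_th[simp]: "A \<in> obj X \<Longrightarrow> cmp X (eps A) (th A) = ident X A" using ak_all by blast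
lemma eps_th'[simp]: "A \<in> obj X \<Longrightarrow> x \<in> arr X \<Longrightarrow> cd X x = A \<Longrightarrow> cmp X (eps A) (cmp X (th A) x) = x"
proof -
  assume a: "A \<in> obj X" "x \<in> arr X" "cd X x = A"
  have "cmp X (eps A) (cmp X (th A) x) = cmp X (cmp X (eps A) (th A)) x" by (rule assoc[symmetric]) (use a in auto)
  also have "\<dots> = x" using a by simp
  finally show ?thesis .
qed
lemma epsS_Sth[simp]: "A \<in> obj X \<Longrightarrow> cmp X (eps (So A)) (Sa (th A)) = ident X (So A)" using ak_all by blast
lemma th_th: "A \<in> obj X \<Longrightarrow> cmp X (th (So A)) (th A) = cmp X (Sa (th A)) (th A)" using ak_all by blast

lemma eps_nat: "f \<in> arr X \<Longrightarrow> cmp X f (eps (dm X f)) = cmp X (eps (cd X f)) (Sa f)"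
  using ak unfolding abstract_kleisli_def hom_def by auto
lemma thS_nat: "f \<in> arr X \<Longrightarrow> cmp X (th (So (cd X f))) (Sa f) = cmp X (Sa (Sa f)) (th (So (dm X f)))"
  using ak unfolding abstract_kleisli_def hom_def by auto

lemma p1_thn: "A \<in> obj X \<Longrightarrow> B \<in> obj X \<Longrightarrow> thn (p1 X A B)"
  using cdak unfolding cart_diff_abstract_kleisli_def by blast
lemma p2_thn: "A \<in> obj X \<Longrightarrow> B \<in> obj X \<Longrightarrow> thn (p2 X A B)"
  using cdak unfolding cart_diff_abstract_kleisli_def by blast
lemma eps_Dlin: "A \<in> obj X \<Longrightarrow> D_linear X (eps A)"
  using cdak unfolding cart_diff_abstract_kleisli_def by blast
lemma th_Dlin: "A \<in> obj X \<Longrightarrow> D_linear X (th A)"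
  using cdak unfolding cart_diff_abstract_kleisli_def by blast

lemma Dif_eps: "A \<in> obj X \<Longrightarrow> Dif X (eps A) = cmp X (eps A) (p2 X (So A) (So A))"
  using eps_Dlin unfolding D_linear_def by simp
lemma Dif_th: "A \<in> obj X \<Longrightarrow> Dif X (th A) = cmp X (th A) (p2 X A A)"
  using th_Dlin unfolding D_linear_def by simp

lemma Sa_lin: "f \<in> arr X \<Longrightarrow> g \<in> arr X \<Longrightarrow> dm X g = dm X f \<Longrightarrow> cd X g = cd X f \<Longrightarrow>
   Sa (pls X (smul X r f) (smul X s g)) = pls X (smul X r (Sa f)) (smul X s (Sa g))"
  using slin unfolding strong_cart_klinear_functor_def hom_def by auto

lemma Sa_zr[simp]: "A \<in> obj X \<Longrightarrow> B \<in> obj X \<Longrightarrow> Sa (zr X A B) = zr X (So A) (So B)"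
  using Sa_lin[of "zr X A B" "zr X A B" 0 0] by simp
lemma Sa_smul[simp]: "f \<in> arr X \<Longrightarrow> Sa (smul X r f) = smul X r (Sa f)"
  using Sa_lin[of f f r 0] by simp
lemma Sa_pls[simp]: "f \<in> arr X \<Longrightarrow> g \<in> arr X \<Longrightarrow> dm X g = dm X f \<Longrightarrow> cd X g = cd X f \<Longrightarrow> Sa (pls X f g) = pls X (Sa f) (Sa g)"
  using Sa_lin[of f g 1 1] by simp

definition om where "om A B = tup X (Sa (p1 X A B)) (Sa (p2 X A B))"
definition omi where "omi A B = inv_arr X (om A B) (So (prd X A B)) (prd X (So A) (So B))"

lemma om_iso: "A \<in> obj X \<Longrightarrow> B \<in> obj X \<Longrightarrow> is_iso X (om A B) (So (prd X A B)) (prd X (So A) (So B))"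
  using slin unfolding strong_cart_klinear_functor_def om_def omegaF_def by blast
lemma omi_props: "A \<in> obj X \<Longrightarrow> B \<in> obj X \<Longrightarrow> omi A B \<in> hom X (prd X (So A) (So B)) (So (prd X A B))"
  "A \<in> obj X \<Longrightarrow> B \<in> obj X \<Longrightarrow> cmp X (omi A B) (om A B) = ident X (So (prd X A B))"
  "A \<in> obj X \<Longrightarrow> B \<in> obj X \<Longrightarrow> cmp X (om A B) (omi A B) = ident X (prd X (So A) (So B))"
  using inv_arr_props[OF om_iso] unfolding omi_def by auto
lemma omi_t[simp]: "A \<in> obj X \<Longrightarrow> B \<in> obj X \<Longrightarrow> omi A B \<in> arr X"
  "A \<in> obj X \<Longrightarrow> B \<in> obj X \<Longrightarrow> dm X (omi A B) = prd X (So A) (So B)"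
  "A \<in> obj X \<Longrightarrow> B \<in> obj X \<Longrightarrow> cd X (omi A B) = So (prd X A B)"
  using omi_props(1) unfolding hom_def by auto
lemma om_t[simp]: "A \<in> obj X \<Longrightarrow> B \<in> obj X \<Longrightarrow> om A B \<in> arr X"
  "A \<in> obj X \<Longrightarrow> B \<in> obj X \<Longrightarrow> dm X (om A B) = So (prd X A B)"
  "A \<in> obj X \<Longrightarrow> B \<in> obj X \<Longrightarrow> cd X (om A B) = prd X (So A) (So B)"
  unfolding om_def by auto

lemma omi_om'[simp]: "A \<in> obj X \<Longrightarrow> B \<in> obj X \<Longrightarrow> x \<in> arr X \<Longrightarrow> cd X x = So (prd X A B) \<Longrightarrow>
   cmp X (omi A B) (cmp X (om A B) x) = x"
proof -
  assume a: "A \<in> obj X" "B \<in> obj X" "x \<in> arr X" "cd X x = So (prd X A B)"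
  have "cmp X (omi A B) (cmp X (om A B) x) = cmp X (cmp X (omi A B) (om A B)) x" by (rule assoc[symmetric]) (use a in auto)
  also have "\<dots> = x" using a omi_props(2)[OF a(1,2)] by simp
  finally show ?thesis .
qed

lemma om_cmp: "A \<in> obj X \<Longrightarrow> B \<in> obj X \<Longrightarrow> x \<in> arr X \<Longrightarrow> cd X x = So (prd X A B) \<Longrightarrow>
   cmp X (om A B) x = tup X (cmp X (Sa (p1 X A B)) x) (cmp X (Sa (p2 X A B)) x)"
  unfolding om_def by simp

lemma Sa_Dif: "f \<in> arr X \<Longrightarrow> Dif X (Sa f) = cmp X (Sa (Dif X f)) (omi (dm X f) (dm X f))"
  using sfun unfolding strong_cart_diff_functor_def hom_def omi_def om_def omegaF_def by auto

lemma iso_b: "is_iso X (bng X (So (trm X))) (So (trm X)) (trm X)"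
  using slin unfolding strong_cart_klinear_functor_def by blast

lemma into_Strm: "f \<in> arr X \<Longrightarrow> g \<in> arr X \<Longrightarrow> dm X g = dm X f \<Longrightarrow> cd X f = So (trm X) \<Longrightarrow> cd X g = So (trm X) \<Longrightarrow> f = g"
proof -
  assume a: "f \<in> arr X" "g \<in> arr X" "dm X g = dm X f" "cd X f = So (trm X)" "cd X g = So (trm X)"
  let ?b = "bng X (So (trm X))" and ?bi = "inv_arr X (bng X (So (trm X))) (So (trm X)) (trm X)"
  have bi: "?bi \<in> hom X (trm X) (So (trm X))" "cmp X ?bi ?b = ident X (So (trm X))"
    using inv_arr_props[OF iso_b] by auto
  have "cmp X ?b f = bng X (dm X f)" "cmp X ?b g = bng X (dm X f)" using a bng_uniq[of "cmp X ?b f"] bng_uniq[of "cmp X ?b g"] by auto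
  then have eq: "cmp X ?bi (cmp X ?b f) = cmp X ?bi (cmp X ?b g)" by simp
  have bi': "?bi \<in> arr X" "dm X ?bi = trm X" "cd X ?bi = So (trm X)" using bi(1) unfolding hom_def by auto
  have k: "cmp X ?bi (cmp X ?b x) = x" if "x \<in> arr X" "cd X x = So (trm X)" for x
  proof -
    have "cmp X (cmp X ?bi ?b) x = cmp X ?bi (cmp X ?b x)" using that bi' by simp
    then show ?thesis using that bi bi' by simp
  qed
  have "f = cmp X ?bi (cmp X ?b f)" using k[OF a(1) a(4)] by (rule sym)
  also note eq
  also have "cmp X ?bi (cmp X ?b g) = g" by (rule k[OF a(2) a(5)])
  finally show "f = g" .
qed

end

context cdcl
begin

lemma ra: "cmp C a b = cmp C c d \<Longrightarrow> a \<in> arr C \<Longrightarrow> b \<in> arr C \<Longrightarrow> c \<in> arr C \<Longrightarrow> d \<in> arr C \<Longrightarrow>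
  x \<in> arr C \<Longrightarrow> dm C a = cd C b \<Longrightarrow> dm C c = cd C d \<Longrightarrow> dm C b = cd C x \<Longrightarrow> dm C d = cd C x \<Longrightarrow>
  cmp C a (cmp C b x) = cmp C c (cmp C d x)"
proof -
  assume e: "cmp C a b = cmp C c d" and t: "a \<in> arr C" "b \<in> arr C" "c \<in> arr C" "d \<in> arr C"
  "x \<in> arr C" "dm C a = cd C b" "dm C c = cd C d" "dm C b = cd C x" "dm C d = cd C x"
  have "cmp C a (cmp C b x) = cmp C (cmp C a b) x" by (rule assoc[symmetric]) (use t in auto)
  also have "\<dots> = cmp C (cmp C c d) x" by (simp only: e)
  also have "\<dots> = cmp C c (cmp C d x)" by (rule assoc) (use t in auto)
  finally show ?thesis .
qed

lemma Dlin_smul: "h \<in> arr C \<Longrightarrow> D_linear C h \<Longrightarrow> x \<in> arr C \<Longrightarrow> cd C x = dm C h \<Longrightarrow>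
  cmp C h (smul C r x) = smul C r (cmp C h x)"
  using Dlin_klin[of h x x r 0] by simp
lemma Dlin_pls: "h \<in> arr C \<Longrightarrow> D_linear C h \<Longrightarrow> x \<in> arr C \<Longrightarrow> y \<in> arr C \<Longrightarrow> dm C y = dm C x \<Longrightarrow>
  cd C x = dm C h \<Longrightarrow> cd C y = dm C h \<Longrightarrow>
  cmp C h (pls C x y) = pls C (cmp C h x) (cmp C h y)"
  using Dlin_klin[of h x y 1 1] by simp
lemma Dlin_zr: "h \<in> arr C \<Longrightarrow> D_linear C h \<Longrightarrow> A \<in> obj C \<Longrightarrow> B = dm C h \<Longrightarrow>
  cmp C h (zr C A B) = zr C A (cd C h)"
  using Dlin_klin[of h "zr C A B" "zr C A B" 0 0] by simp

end

context akl
begin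

lemma th_smul[simp]: "x \<in> arr X \<Longrightarrow> cd X x = A \<Longrightarrow> A \<in> obj X \<Longrightarrow> cmp X (th A) (smul X r x) = smul X r (cmp X (th A) x)"
  by (rule Dlin_smul) (auto intro: th_Dlin)
lemma th_pls[simp]: "x \<in> arr X \<Longrightarrow> y \<in> arr X \<Longrightarrow> dm X y = dm X x \<Longrightarrow> cd X x = A \<Longrightarrow> cd X y = A \<Longrightarrow> A \<in> obj X \<Longrightarrow>
   cmp X (th A) (pls X x y) = pls X (cmp X (th A) x) (cmp X (th A) y)"
  by (rule Dlin_pls) (auto intro: th_Dlin)
lemma th_zr[simp]: "A \<in> obj X \<Longrightarrow> B \<in> obj X \<Longrightarrow> cmp X (th B) (zr X A B) = zr X A (So B)"
  using Dlin_zr[of "th B" A B] th_Dlin by simp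
lemma eps_smul[simp]: "x \<in> arr X \<Longrightarrow> cd X x = So A \<Longrightarrow> A \<in> obj X \<Longrightarrow> cmp X (eps A) (smul X r x) = smul X r (cmp X (eps A) x)"
  by (rule Dlin_smul) (auto intro: eps_Dlin)
lemma eps_pls[simp]: "x \<in> arr X \<Longrightarrow> y \<in> arr X \<Longrightarrow> dm X y = dm X x \<Longrightarrow> cd X x = So A \<Longrightarrow> cd X y = So A \<Longrightarrow> A \<in> obj X \<Longrightarrow>
   cmp X (eps A) (pls X x y) = pls X (cmp X (eps A) x) (cmp X (eps A) y)"
  by (rule Dlin_pls) (auto intro: eps_Dlin)

lemma Sp1_omi: "A \<in> obj X \<Longrightarrow> B \<in> obj X \<Longrightarrow> cmp X (Sa (p1 X A B)) (omi A B) = p1 X (So A) (So B)"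
proof -
  assume a: "A \<in> obj X" "B \<in> obj X"
  have "cmp X (p1 X (So A) (So B)) (cmp X (om A B) (omi A B)) = p1 X (So A) (So B)"
    using a omi_props(3)[OF a] by simp
  then show ?thesis using a unfolding om_def by simp
qed
lemma Sp2_omi: "A \<in> obj X \<Longrightarrow> B \<in> obj X \<Longrightarrow> cmp X (Sa (p2 X A B)) (omi A B) = p2 X (So A) (So B)"
proof -
  assume a: "A \<in> obj X" "B \<in> obj X"
  have "cmp X (p2 X (So A) (So B)) (cmp X (om A B) (omi A B)) = p2 X (So A) (So B)"
    using a omi_props(3)[OF a] by simp
  then show ?thesis using a unfolding om_def by simp
qed

lemma delta_Dlin: "A \<in> obj X \<Longrightarrow> D_linear X (Sa (eps A))"
proof -
  assume a: "A \<in> obj X"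
  have "Dif X (Sa (eps A)) = cmp X (Sa (Dif X (eps A))) (omi (So A) (So A))"
    using a Sa_Dif[of "eps A"] by simp
  also have "\<dots> = cmp X (Sa (eps A)) (cmp X (Sa (p2 X (So A) (So A))) (omi (So A) (So A)))"
    using a by (simp add: Dif_eps)
  also have "\<dots> = cmp X (Sa (eps A)) (p2 X (So (So A)) (So (So A)))"
    using a by (simp add: Sp2_omi)
  finally show ?thesis unfolding D_linear_def using a by simp
qed

lemma delta_smul[simp]: "x \<in> arr X \<Longrightarrow> cd X x = So (So A) \<Longrightarrow> A \<in> obj X \<Longrightarrow> cmp X (Sa (eps A)) (smul X r x) = smul X r (cmp X (Sa (eps A)) x)"
  by (rule Dlin_smul) (auto intro: delta_Dlin)
lemma delta_pls[simp]: "x \<in> arr X \<Longrightarrow> y \<in> arr X \<Longrightarrow> dm X y = dm X x \<Longrightarrow> cd X x = So (So A) \<Longrightarrow> cd X y = So (So A) \<Longrightarrow> A \<in> obj X \<Longrightarrow>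
   cmp X (Sa (eps A)) (pls X x y) = pls X (cmp X (Sa (eps A)) x) (cmp X (Sa (eps A)) y)"
  by (rule Dlin_pls) (auto intro: delta_Dlin)

lemma eps_nat': "f \<in> arr X \<Longrightarrow> x \<in> arr X \<Longrightarrow> cd X x = So (dm X f) \<Longrightarrow>
   cmp X f (cmp X (eps (dm X f)) x) = cmp X (eps (cd X f)) (cmp X (Sa f) x)"
  by (rule ra[OF eps_nat]) auto
lemma thS_nat': "f \<in> arr X \<Longrightarrow> x \<in> arr X \<Longrightarrow> cd X x = So (dm X f) \<Longrightarrow>
   cmp X (th (So (cd X f))) (cmp X (Sa f) x) = cmp X (Sa (Sa f)) (cmp X (th (So (dm X f))) x)"
  by (rule ra[OF thS_nat]) auto

lemma Seps_Sth[simp]: "A \<in> obj X \<Longrightarrow> cmp X (Sa (eps A)) (Sa (th A)) = ident X (So A)"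
proof -
  assume a: "A \<in> obj X"
  have "Sa (cmp X (eps A) (th A)) = cmp X (Sa (eps A)) (Sa (th A))" by (rule Sa_cmp) (use a in auto)
  then show ?thesis using a by simp
qed

lemma delta_thS: "A \<in> obj X \<Longrightarrow> cmp X (Sa (eps A)) (th (So A)) = ident X (So A)"
proof -
  assume a: "A \<in> obj X"
  let ?X = "cmp X (Sa (eps A)) (th (So A))"
  have "?X = cmp X ?X (cmp X (eps (So A)) (Sa (th A)))" using a by simp
  also have "\<dots> = cmp X (Sa (eps A)) (cmp X (th (So A)) (cmp X (eps (So A)) (Sa (th A))))" using a by simp
  also have "\<dots> = cmp X (Sa (eps A)) (cmp X (eps (So (So A))) (cmp X (Sa (th (So A))) (Sa (th A))))"
    using a eps_nat'[of "th (So A)" "Sa (th A)"] by simp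
  also have "\<dots> = cmp X (Sa (eps A)) (cmp X (eps (So (So A))) (Sa (cmp X (th (So A)) (th A))))"
    using a by simp
  also have "\<dots> = cmp X (Sa (eps A)) (cmp X (eps (So (So A))) (Sa (cmp X (Sa (th A)) (th A))))"
    using a th_th by simp
  also have "\<dots> = cmp X (Sa (eps A)) (cmp X (eps (So (So A))) (cmp X (Sa (Sa (th A))) (Sa (th A))))"
    using a by simp
  also have "\<dots> = cmp X (Sa (eps A)) (cmp X (Sa (th A)) (cmp X (eps (So A)) (Sa (th A))))"
    using a eps_nat'[of "Sa (th A)" "Sa (th A)"] by simp
  also have "\<dots> = cmp X (Sa (cmp X (eps A) (th A))) (ident X (So A))"
    using a by simp
  also have "\<dots> = ident X (So A)" using a by simp
  finally show ?thesis .
qed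

end

context akl
begin

lemma ra1: "cmp X a b = c \<Longrightarrow> a \<in> arr X \<Longrightarrow> b \<in> arr X \<Longrightarrow> x \<in> arr X \<Longrightarrow>
  dm X a = cd X b \<Longrightarrow> dm X b = cd X x \<Longrightarrow> cmp X a (cmp X b x) = cmp X c x"
proof -
  assume e: "cmp X a b = c" and t: "a \<in> arr X" "b \<in> arr X" "x \<in> arr X" "dm X a = cd X b" "dm X b = cd X x"
  have "cmp X a (cmp X b x) = cmp X (cmp X a b) x" by (rule assoc[symmetric]) (use t in auto)
  then show ?thesis by (simp only: e)
qed

lemma SaSa: "f \<in> arr X \<Longrightarrow> g \<in> arr X \<Longrightarrow> dm X g = cd X f \<Longrightarrow> cmp X g f = h \<Longrightarrow> cmp X (Sa g) (Sa f) = Sa h"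
proof -
  assume a: "f \<in> arr X" "g \<in> arr X" "dm X g = cd X f" "cmp X g f = h"
  have "Sa (cmp X g f) = cmp X (Sa g) (Sa f)" by (rule Sa_cmp) (use a in auto)
  then show ?thesis using a(4) by simp
qed

lemma thn_def': "thn f = (cmp X (th (cd X f)) f = cmp X (Sa f) (th (dm X f)))"
  unfolding theta_natural_def by simp

lemma thn_ra: "thn g \<Longrightarrow> g \<in> arr X \<Longrightarrow> x \<in> arr X \<Longrightarrow> cd X x = dm X g \<Longrightarrow>
  cmp X (th (cd X g)) (cmp X g x) = cmp X (Sa g) (cmp X (th (dm X g)) x)"
  unfolding thn_def' by (rule ra) auto

lemma thn_id: "A \<in> obj X \<Longrightarrow> thn (ident X A)" unfolding thn_def' by simp

lemma thn_cmp: "f \<in> arr X \<Longrightarrow> g \<in> arr X \<Longrightarrow> dm X g = cd X f \<Longrightarrow> thn f \<Longrightarrow> thn g \<Longrightarrow> thn (cmp X g f)"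
proof -
  assume a: "f \<in> arr X" "g \<in> arr X" "dm X g = cd X f" "thn f" "thn g"
  have "cmp X (th (cd X g)) (cmp X g f) = cmp X (Sa g) (cmp X (th (dm X g)) f)" using a thn_ra by simp
  also have "\<dots> = cmp X (Sa g) (cmp X (Sa f) (th (dm X f)))" using a(3,4) unfolding thn_def' by simp
  also have "\<dots> = cmp X (Sa (cmp X g f)) (th (dm X f))" using a by simp
  finally show ?thesis unfolding thn_def' using a by simp
qed

lemma thn_Sa: "f \<in> arr X \<Longrightarrow> thn (Sa f)" unfolding thn_def' using thS_nat by simp
lemma thn_th: "A \<in> obj X \<Longrightarrow> thn (th A)" unfolding thn_def' using th_th by simp

lemma thn_smul: "f \<in> arr X \<Longrightarrow> thn f \<Longrightarrow> thn (smul X r f)"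
  unfolding thn_def' by simp
lemma thn_pls: "f \<in> arr X \<Longrightarrow> g \<in> arr X \<Longrightarrow> dm X g = dm X f \<Longrightarrow> cd X g = cd X f \<Longrightarrow> thn f \<Longrightarrow> thn g \<Longrightarrow> thn (pls X f g)"
  unfolding thn_def' by simp
lemma thn_zr: "A \<in> obj X \<Longrightarrow> B \<in> obj X \<Longrightarrow> thn (zr X A B)"
  unfolding thn_def' by simp
lemma thn_bng: "A \<in> obj X \<Longrightarrow> thn (bng X A)"
  unfolding thn_def' by (rule into_Strm) auto

lemma thn_tup: "f \<in> arr X \<Longrightarrow> g \<in> arr X \<Longrightarrow> dm X g = dm X f \<Longrightarrow> thn f \<Longrightarrow> thn g \<Longrightarrow> thn (tup X f g)"
proof -
  assume a: "f \<in> arr X" "g \<in> arr X" "dm X g = dm X f" "thn f" "thn g"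
  define B where "B = cd X f"
  define D where "D = cd X g"
  define A where "A = dm X f"
  have o: "A \<in> obj X" "B \<in> obj X" "D \<in> obj X" "cd X f = B" "cd X g = D" "dm X f = A" "dm X g = A"
    using a by (auto simp: A_def B_def D_def)
  define h1 where "h1 = cmp X (th (prd X B D)) (tup X f g)"
  define h2 where "h2 = cmp X (Sa (tup X f g)) (th A)"
  have h: "h1 \<in> arr X" "cd X h1 = So (prd X B D)" "h2 \<in> arr X" "cd X h2 = So (prd X B D)"
    using a o by (auto simp: h1_def h2_def)
  have e1: "cmp X (Sa (p1 X B D)) h1 = cmp X (Sa f) (th A)"
  proof -
    have "cmp X (Sa (p1 X B D)) h1 = cmp X (th B) (cmp X (p1 X B D) (tup X f g))"
      unfolding h1_def using thn_ra[OF p1_thn, of B D "tup X f g"] o a by simp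
    also have "\<dots> = cmp X (th (cd X f)) f" using o a by simp
    also have "\<dots> = cmp X (Sa f) (th A)" using a(4) o unfolding thn_def' by simp
    finally show ?thesis .
  qed
  have e2: "cmp X (Sa (p2 X B D)) h1 = cmp X (Sa g) (th A)"
  proof -
    have "cmp X (Sa (p2 X B D)) h1 = cmp X (th D) (cmp X (p2 X B D) (tup X f g))"
      unfolding h1_def using thn_ra[OF p2_thn, of B D "tup X f g"] o a by simp
    also have "\<dots> = cmp X (th (cd X g)) g" using o a by simp
    also have "\<dots> = cmp X (Sa g) (th A)" using a(5) o unfolding thn_def' by simp
    finally show ?thesis .
  qed
  have e3: "cmp X (Sa (p1 X B D)) h2 = cmp X (Sa f) (th A)"
    unfolding h2_def by (rule ra1[OF SaSa]) (use o a in auto)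
  have e4: "cmp X (Sa (p2 X B D)) h2 = cmp X (Sa g) (th A)"
    unfolding h2_def by (rule ra1[OF SaSa]) (use o a in auto)
  have "cmp X (om B D) h1 = cmp X (om B D) h2" using om_cmp[of B D h1] om_cmp[of B D h2] h o e1 e2 e3 e4 by simp
  then have "cmp X (omi B D) (cmp X (om B D) h1) = cmp X (omi B D) (cmp X (om B D) h2)" by simp
  then have "h1 = h2" using h o by simp
  then show ?thesis unfolding thn_def' h1_def h2_def using o a by simp
qed

lemma Dif_thf: "f \<in> arr X \<Longrightarrow> B = cd X f \<Longrightarrow> Dif X (cmp X (th B) f) = cmp X (th B) (Dif X f)"
proof -
  assume a: "f \<in> arr X" "B = cd X f"
  have "Dif X (cmp X (th B) f) = cmp X (Dif X (th B)) (tup X (cmp X f (p1 X (dm X f) (dm X f))) (Dif X f))"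
    by (rule dif_cmp) (use a in auto)
  also have "\<dots> = cmp X (th B) (Dif X f)" using a by (simp add: Dif_th)
  finally show ?thesis .
qed

lemma tup_thp: "A \<in> obj X \<Longrightarrow> tup X (cmp X (th A) (p1 X A A)) (cmp X (th A) (p2 X A A)) = cmp X (om A A) (th (prd X A A))"
proof -
  assume a: "A \<in> obj X"
  have "cmp X (om A A) (th (prd X A A)) = tup X (cmp X (Sa (p1 X A A)) (th (prd X A A))) (cmp X (Sa (p2 X A A)) (th (prd X A A)))"
    using a by (simp add: om_cmp)
  also have "\<dots> = tup X (cmp X (th A) (p1 X A A)) (cmp X (th A) (p2 X A A))"
    using a p1_thn[OF a a] p2_thn[OF a a] unfolding thn_def' by simp
  finally show ?thesis by simp
qed

lemma Dif_Safth: "f \<in> arr X \<Longrightarrow> A = dm X f \<Longrightarrow> Dif X (cmp X (Sa f) (th A)) = cmp X (Sa (Dif X f)) (th (prd X A A))"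
proof -
  assume a: "f \<in> arr X" "A = dm X f"
  have o: "A \<in> obj X" using a by simp
  have "Dif X (cmp X (Sa f) (th A)) = cmp X (Dif X (Sa f)) (tup X (cmp X (th A) (p1 X A A)) (Dif X (th A)))"
    by (rule dif_cmp) (use a in auto)
  also have "\<dots> = cmp X (cmp X (Sa (Dif X f)) (omi A A)) (cmp X (om A A) (th (prd X A A)))"
    using a o by (simp add: Dif_th Sa_Dif tup_thp[symmetric] del: assoc cmp_tup)
  also have "\<dots> = cmp X (Sa (Dif X f)) (th (prd X A A))"
    using a o by simp
  finally show ?thesis .
qed

lemma thn_Dif: "f \<in> arr X \<Longrightarrow> thn f \<Longrightarrow> thn (Dif X f)"
proof -
  assume a: "f \<in> arr X" "thn f"
  have "cmp X (th (cd X f)) (Dif X f) = Dif X (cmp X (th (cd X f)) f)" using Dif_thf a by simp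
  also have "\<dots> = Dif X (cmp X (Sa f) (th (dm X f)))" using a(2) unfolding thn_def' by simp
  also have "\<dots> = cmp X (Sa (Dif X f)) (th (prd X (dm X f) (dm X f)))" using Dif_Safth a by simp
  finally show ?thesis unfolding thn_def' using a by simp
qed

lemma thn_inv: "is_iso X f A B \<Longrightarrow> thn f \<Longrightarrow> thn (inv_arr X f A B)"
proof -
  assume i: "is_iso X f A B" and t: "thn f"
  let ?g = "inv_arr X f A B"
  have g: "?g \<in> arr X" "dm X ?g = B" "cd X ?g = A" "cmp X ?g f = ident X A" "cmp X f ?g = ident X B"
    using inv_arr_props[OF i] unfolding hom_def by auto
  have f: "f \<in> arr X" "dm X f = A" "cd X f = B" using i unfolding is_iso_def hom_def by auto
  have o: "A \<in> obj X" "B \<in> obj X" using f by auto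
  have SgSf: "cmp X (Sa ?g) (cmp X (Sa f) x) = x" if "x \<in> arr X" "cd X x = So A" for x
  proof -
    have "cmp X (Sa ?g) (cmp X (Sa f) x) = cmp X (Sa (ident X A)) x" by (rule ra1[OF SaSa]) (use g f that in auto)
    then show ?thesis using that o by simp
  qed
  have "cmp X (th A) ?g = cmp X (Sa ?g) (cmp X (Sa f) (cmp X (th A) ?g))" using SgSf g o by simp
  also have "\<dots> = cmp X (Sa ?g) (cmp X (th B) (cmp X f ?g))"
    using thn_ra[OF t f(1), of ?g] f g by simp
  also have "\<dots> = cmp X (Sa ?g) (th B)" using g o by simp
  finally show ?thesis unfolding thn_def' using g by simp
qed

lemma Y_cdc: "cart_diff_cat (theta_nat X Sa th)"
  unfolding theta_nat_def
  by (rule sub_cdc) (auto intro: thn_id thn_cmp thn_zr thn_smul thn_pls thn_bng p1_thn p2_thn thn_tup thn_Dif)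

end

context akl
begin

abbreviation "Y \<equiv> theta_nat X Sa th"

lemma Y_sel[simp]: "obj Y = obj X" "dm Y = dm X" "cd Y = cd X" "ident Y = ident X" "cmp Y = cmp X"
  "smul Y = smul X" "pls Y = pls X" "zr Y = zr X" "trm Y = trm X" "bng Y = bng X" "prd Y = prd X"
  "p1 Y = p1 X" "p2 Y = p2 X" "tup Y = tup X" "Dif Y = Dif X" "arr Y = {f \<in> arr X. thn f}"
  unfolding theta_nat_def by simp_all

lemma homY: "hom Y A B = {f \<in> hom X A B. thn f}" unfolding hom_def by auto

lemma iso_Y: assumes i: "is_iso X f A B" and t: "thn f"
  shows "is_iso Y f A B" "inv_arr Y f A B = inv_arr X f A B"
proof -
  let ?g = "inv_arr X f A B"
  have g: "?g \<in> hom X B A" "cmp X ?g f = ident X A" "cmp X f ?g = ident X B"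
    using inv_arr_props[OF i] by auto
  have f: "f \<in> hom X A B" using i unfolding is_iso_def by blast
  have gt: "thn ?g" by (rule thn_inv[OF i t])
  have "f \<in> hom Y A B" "?g \<in> hom Y B A" "cmp Y ?g f = ident Y A" "cmp Y f ?g = ident Y B"
    using f g t gt unfolding homY by auto
  from cdcl.inv_arr_eqI[OF cdcl.intro[OF Y_cdc] this]
  show "is_iso Y f A B" "inv_arr Y f A B = inv_arr X f A B" by auto
qed

lemma om_thn: "A \<in> obj X \<Longrightarrow> B \<in> obj X \<Longrightarrow> thn (om A B)"
  unfolding om_def by (rule thn_tup) (auto intro: thn_Sa)

lemma omegaF_Y: "omegaF Y Y Sa A B = om A B" unfolding omegaF_def om_def by simp
lemma omegaF_X: "omegaF X X Sa A B = om A B" unfolding omegaF_def om_def by simp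

lemma Y_functor: "is_functor Y Y So Sa"
  unfolding is_functor_def homY
proof (intro conjI allI impI ballI)
  show "category Y" using Y_cdc cdcl.cat cdcl.intro by blast
  then show "category Y" .
next
  fix A assume "A \<in> obj Y" then show "So A \<in> obj Y" "Sa (ident Y A) = ident Y (So A)" by simp_all
next
  fix A B f assume "f \<in> {f \<in> hom X A B. thn f}"
  then show "Sa f \<in> {f \<in> hom X (So A) (So B). thn f}" by (auto simp: hom_def thn_Sa)
next
  fix A B D f g assume "f \<in> {f \<in> hom X A B. thn f}" "g \<in> {f \<in> hom X B D. thn f}"
  then show "Sa (cmp Y g f) = cmp Y (Sa g) (Sa f)" by (auto simp: hom_def)
qed

lemma Y_monad: "monad Y So Sa (\<lambda>A. Sa (eps A)) th"
  unfolding monad_def homY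
proof (intro conjI allI impI ballI)
  show "is_functor Y Y So Sa" by (rule Y_functor)
next
  fix A assume a: "A \<in> obj Y"
  then show "th A \<in> {f \<in> hom X A (So A). thn f}" by (auto simp: hom_def thn_th)
  show "Sa (eps A) \<in> {f \<in> hom X (So (So A)) (So A). thn f}" using a by (auto simp: hom_def thn_Sa)
  show "cmp Y (Sa (eps A)) (Sa (Sa (eps A))) = cmp Y (Sa (eps A)) (Sa (eps (So A)))"
  proof -
    have e: "cmp X (eps A) (eps (So A)) = cmp X (eps A) (Sa (eps A))" using eps_nat[of "eps A"] a by simp
    have "cmp X (Sa (eps A)) (Sa (Sa (eps A))) = Sa (cmp X (eps A) (Sa (eps A)))" by (rule SaSa) (use a in auto)
    also have "\<dots> = Sa (cmp X (eps A) (eps (So A)))" by (simp only: e)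
    also have "\<dots> = cmp X (Sa (eps A)) (Sa (eps (So A)))" by (rule Sa_cmp) (use a in auto)
    finally show ?thesis by simp
  qed
  show "cmp Y (Sa (eps A)) (th (So A)) = ident Y (So A)" using a delta_thS by simp
  show "cmp Y (Sa (eps A)) (Sa (th A)) = ident Y (So A)" using a by simp
next
  fix A B f assume f: "f \<in> {f \<in> hom X A B. thn f}"
  then have t: "f \<in> arr X" "dm X f = A" "cd X f = B" "thn f" by (auto simp: hom_def)
  then show "cmp Y (th B) f = cmp Y (Sa f) (th A)" unfolding thn_def' by simp
  have e: "cmp X (eps B) (Sa f) = cmp X f (eps A)" using eps_nat[of f] t by simp
  have "cmp X (Sa (eps B)) (Sa (Sa f)) = Sa (cmp X (eps B) (Sa f))" by (rule SaSa) (use t in auto)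
  also have "\<dots> = Sa (cmp X f (eps A))" by (simp only: e)
  also have "\<dots> = cmp X (Sa f) (Sa (eps A))" by (rule Sa_cmp) (use t in auto)
  finally show "cmp Y (Sa (eps B)) (Sa (Sa f)) = cmp Y (Sa f) (Sa (eps A))" by simp
qed

lemma Y_strong: "strong_cart_diff_functor Y Y So Sa"
  unfolding strong_cart_diff_functor_def strong_cart_klinear_functor_def
proof (intro conjI allI impI ballI)
  show "is_functor Y Y So Sa" by (rule Y_functor)
  show "is_iso Y (bng Y (So (trm Y))) (So (trm Y)) (trm Y)"
    using iso_Y(1)[OF iso_b thn_bng] by simp
next
  fix A B assume a: "A \<in> obj Y" "B \<in> obj Y"
  show "is_iso Y (omegaF Y Y Sa A B) (So (prd Y A B)) (prd Y (So A) (So B))"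
    unfolding omegaF_Y using iso_Y(1)[OF om_iso om_thn] a by simp
next
  fix A B f g r s assume "f \<in> hom Y A B" "g \<in> hom Y A B"
  then show "Sa (pls Y (smul Y r f) (smul Y s g)) = pls Y (smul Y r (Sa f)) (smul Y s (Sa g))"
    using Sa_lin unfolding homY hom_def by auto
next
  fix A B f assume "f \<in> hom Y A B"
  then have t: "f \<in> arr X" "dm X f = A" "cd X f = B" "thn f" unfolding homY hom_def by auto
  have "inv_arr Y (omegaF Y Y Sa A A) (So (prd Y A A)) (prd Y (So A) (So A)) = omi A A"
  proof -
    have "A \<in> obj X" using t arr_dm by blast
    then show ?thesis unfolding omegaF_Y omi_def using iso_Y(2)[OF om_iso om_thn] by simp
  qed
  then show "Dif Y (Sa f) = cmp Y (Sa (Dif Y f)) (inv_arr Y (omegaF Y Y Sa A A) (So (prd Y A A)) (prd Y (So A) (So A)))"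
    using Sa_Dif t by simp
qed

lemma Y_monad_main: "cart_diff_monad Y So Sa (\<lambda>A. Sa (eps A)) th"
  unfolding cart_diff_monad_def
proof (intro conjI ballI)
  show "cart_diff_cat Y" by (rule Y_cdc)
  show "monad Y So Sa (\<lambda>A. Sa (eps A)) th" by (rule Y_monad)
  show "strong_cart_diff_functor Y Y So Sa" by (rule Y_strong)
next
  fix A assume a: "A \<in> obj Y"
  show "D_linear Y (th A)" using th_Dlin a unfolding D_linear_def by simp
  show "D_linear Y (Sa (eps A))" using delta_Dlin a unfolding D_linear_def by simp
qed

end

context akl
begin

abbreviation "K \<equiv> kl_cat X So Sa eps th"
abbreviation "G \<equiv> G_theta X Sa th"
abbreviation "Gi \<equiv> G_theta_inv X eps"

lemma bi_eq: "inv_arr Y (bng X (So (trm X))) (So (trm X)) (trm X) = inv_arr X (bng X (So (trm X))) (So (trm X)) (trm X)"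
  using iso_Y(2)[OF iso_b thn_bng] by simp

definition bi where "bi = inv_arr X (bng X (So (trm X))) (So (trm X)) (trm X)"
lemma bi_t[simp]: "bi \<in> arr X" "dm X bi = trm X" "cd X bi = So (trm X)"
  using inv_arr_props(1)[OF iso_b] unfolding bi_def hom_def by auto

lemma omiY: "A \<in> obj X \<Longrightarrow> B \<in> obj X \<Longrightarrow>
  inv_arr Y (tup X (Sa (p1 X A B)) (Sa (p2 X A B))) (So (prd X A B)) (prd X (So A) (So B)) = omi A B"
  using iso_Y(2)[OF om_iso om_thn] unfolding omi_def om_def by simp

lemma K_sel[simp]: "obj K = obj X" "trm K = trm X" "prd K = prd X"
  "arr K = {(A, B, f) | A B f. B \<in> obj X \<and> f \<in> hom Y A (So B)}"
  "dm K (A, B, f) = A" "cd K (A, B, f) = B" "ident K A = (A, A, th A)"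
  "cmp K (B', D, g) (A, B, f) = (A, D, cmp X (Sa (eps D)) (cmp X (Sa g) f))"
  "smul K r (A, B, f) = (A, B, smul X r f)"
  "pls K (A, B, f) (A', B', g) = (A, B, pls X f g)"
  "zr K A B = (A, B, zr X A (So B))"
  "bng K A = (A, trm X, cmp X bi (bng X A))"
  "p1 K A B = (prd X A B, A, cmp X (th A) (p1 X A B))"
  "p2 K A B = (prd X A B, B, cmp X (th B) (p2 X A B))"
  "A \<in> obj X \<Longrightarrow> B \<in> obj X \<Longrightarrow> tup K (D, A, f) (D', B, g) = (D, prd X A B, cmp X (omi A B) (tup X f g))"
  "Dif K (A, B, f) = (prd X A A, B, Dif X f)"
  unfolding kl_cat_def Let_def by (simp_all add: bi_eq bi_def omiY)

lemma G_def': "G f = (dm X f, cd X f, cmp X (Sa f) (th (dm X f)))" unfolding G_theta_def by simp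
lemma Gi_def'[simp]: "Gi (A, B, f) = cmp X (eps B) f" unfolding G_theta_inv_def by simp

lemma GiG[simp]: "f \<in> arr X \<Longrightarrow> Gi (G f) = f"
proof -
  assume a: "f \<in> arr X"
  have "cmp X (eps (cd X f)) (cmp X (Sa f) (th (dm X f))) = cmp X f (cmp X (eps (dm X f)) (th (dm X f)))"
    using eps_nat'[of f "th (dm X f)"] a by simp
  then show ?thesis unfolding G_def' using a by simp
qed

lemma GGi: "B \<in> obj X \<Longrightarrow> f \<in> hom Y A (So B) \<Longrightarrow> G (Gi (A, B, f)) = (A, B, f)"
proof -
  assume a: "B \<in> obj X" "f \<in> hom Y A (So B)"
  then have t: "f \<in> arr X" "dm X f = A" "cd X f = So B" "thn f" unfolding homY hom_def by auto
  have A: "A \<in> obj X" using t arr_dm by blast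
  have "cmp X (Sa (cmp X (eps B) f)) (th A) = cmp X (Sa (eps B)) (cmp X (Sa f) (th A))" using t a A by simp
  also have "\<dots> = cmp X (Sa (eps B)) (cmp X (th (So B)) f)" using t unfolding thn_def' by simp
  also have "\<dots> = f" using delta_thS[OF a(1)] t a by (simp add: ra1)
  finally show ?thesis unfolding G_def' using t a A by simp
qed

end

context akl
begin

lemma delta_SSg': "g \<in> arr X \<Longrightarrow> x \<in> arr X \<Longrightarrow> cd X x = So (So (dm X g)) \<Longrightarrow>
  cmp X (Sa (eps (cd X g))) (cmp X (Sa (Sa g)) x) = cmp X (Sa g) (cmp X (Sa (eps (dm X g))) x)"
proof -
  assume a: "g \<in> arr X" "x \<in> arr X" "cd X x = So (So (dm X g))"
  have e: "cmp X (eps (cd X g)) (Sa g) = cmp X g (eps (dm X g))" using eps_nat[of g] a by simp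
  have "cmp X (Sa (eps (cd X g))) (Sa (Sa g)) = Sa (cmp X (eps (cd X g)) (Sa g))" by (rule SaSa) (use a in auto)
  also have "\<dots> = Sa (cmp X g (eps (dm X g)))" by (simp only: e)
  also have "\<dots> = cmp X (Sa g) (Sa (eps (dm X g)))" by (rule Sa_cmp) (use a in auto)
  finally show ?thesis by (rule ra) (use a in auto)
qed

lemma Seps_Sth'[simp]: "A \<in> obj X \<Longrightarrow> x \<in> arr X \<Longrightarrow> cd X x = So A \<Longrightarrow> cmp X (Sa (eps A)) (cmp X (Sa (th A)) x) = x"
proof -
  assume a: "A \<in> obj X" "x \<in> arr X" "cd X x = So A"
  have "cmp X (Sa (eps A)) (cmp X (Sa (th A)) x) = cmp X (ident X (So A)) x" by (rule ra1) (use a in auto)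
  then show ?thesis using a by simp
qed

lemma G_thn: "f \<in> arr X \<Longrightarrow> thn (cmp X (Sa f) (th (dm X f)))"
  by (rule thn_cmp) (auto intro: thn_th thn_Sa)

lemma G_arr: "f \<in> arr X \<Longrightarrow> G f \<in> arr K"
  unfolding G_def' using G_thn by (auto simp: homY hom_def)

lemma arrK_G: "arr K = G ` arr X"
proof
  show "G ` arr X \<subseteq> arr K" using G_arr by auto
next
  show "arr K \<subseteq> G ` arr X"
  proof
    fix x assume x: "x \<in> arr K"
    then obtain A B f where e: "x = (A, B, f)" "B \<in> obj X" "f \<in> hom Y A (So B)" by auto
    then have t: "f \<in> arr X" "cd X f = So B" unfolding homY hom_def by auto
    have "x = G (Gi (A, B, f))" using GGi e by simp
    moreover have "Gi (A, B, f) \<in> arr X" using t e by simp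
    ultimately show "x \<in> G ` arr X" by blast
  qed
qed

lemma G_dm[simp]: "dm K (G f) = dm X f" and G_cd[simp]: "cd K (G f) = cd X f" unfolding G_def' by simp_all

lemma G_inj: "inj_on G (arr X)" by (rule inj_on_inverseI[of _ Gi]) simp

lemma G_id: "A \<in> obj X \<Longrightarrow> ident K A = G (ident X A)" unfolding G_def' by simp

lemma G_cmp: "f \<in> arr X \<Longrightarrow> g \<in> arr X \<Longrightarrow> dm X g = cd X f \<Longrightarrow> cmp K (G g) (G f) = G (cmp X g f)"
  unfolding G_def' using delta_SSg' by simp

lemma G_smul: "f \<in> arr X \<Longrightarrow> smul K r (G f) = G (smul X r f)" unfolding G_def' by simp
lemma G_pls: "f \<in> arr X \<Longrightarrow> g \<in> arr X \<Longrightarrow> dm X g = dm X f \<Longrightarrow> cd X g = cd X f \<Longrightarrow> pls K (G f) (G g) = G (pls X f g)"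
  unfolding G_def' by simp
lemma G_zr: "A \<in> obj X \<Longrightarrow> B \<in> obj X \<Longrightarrow> zr K A B = G (zr X A B)" unfolding G_def' by simp
lemma G_bng: "A \<in> obj X \<Longrightarrow> bng K A = G (bng X A)"
  unfolding G_def' by (simp, rule into_Strm) auto
lemma G_p1: "A \<in> obj X \<Longrightarrow> B \<in> obj X \<Longrightarrow> p1 K A B = G (p1 X A B)"
  unfolding G_def' using p1_thn unfolding thn_def' by simp
lemma G_p2: "A \<in> obj X \<Longrightarrow> B \<in> obj X \<Longrightarrow> p2 K A B = G (p2 X A B)"
  unfolding G_def' using p2_thn unfolding thn_def' by simp

lemma G_tup: "f \<in> arr X \<Longrightarrow> g \<in> arr X \<Longrightarrow> dm X g = dm X f \<Longrightarrow> tup K (G f) (G g) = G (tup X f g)"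
proof -
  assume a: "f \<in> arr X" "g \<in> arr X" "dm X g = dm X f"
  define A where "A = dm X f"
  define B where "B = cd X f"
  define D where "D = cd X g"
  have o: "A \<in> obj X" "B \<in> obj X" "D \<in> obj X" "cd X f = B" "cd X g = D" "dm X f = A" "dm X g = A"
    using a by (auto simp: A_def B_def D_def)
  have e1: "cmp X (Sa (p1 X B D)) (cmp X (Sa (tup X f g)) (th A)) = cmp X (Sa f) (th A)"
    by (rule ra1[OF SaSa]) (use o a in auto)
  have e2: "cmp X (Sa (p2 X B D)) (cmp X (Sa (tup X f g)) (th A)) = cmp X (Sa g) (th A)"
    by (rule ra1[OF SaSa]) (use o a in auto)
  have "tup X (cmp X (Sa f) (th A)) (cmp X (Sa g) (th A)) = cmp X (om B D) (cmp X (Sa (tup X f g)) (th A))"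
    using om_cmp[of B D "cmp X (Sa (tup X f g)) (th A)"] o a e1 e2 by simp
  then have "cmp X (omi B D) (tup X (cmp X (Sa f) (th A)) (cmp X (Sa g) (th A))) = cmp X (Sa (tup X f g)) (th A)"
    using o a by simp
  then show ?thesis unfolding G_def' using o a by simp
qed

lemma G_Dif: "f \<in> arr X \<Longrightarrow> Dif K (G f) = G (Dif X f)"
  unfolding G_def' using Dif_Safth by simp

lemma K_cdc: "cart_diff_cat K"
proof (rule transport_cdc[where F = G])
  show "obj K = obj X" "trm K = trm X" "prd K = prd X" by simp_all
  show "arr K = G ` arr X" by (rule arrK_G)
  show "inj_on G (arr X)" by (rule G_inj)
qed (simp_all only: G_dm G_cd G_id G_cmp G_smul G_pls G_zr G_bng G_p1 G_p2 G_tup G_Dif)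

end

context akl
begin

lemma K_cdcl: "cdcl K" by (rule cdcl.intro[OF K_cdc])

lemma homK_E: "f \<in> hom K A B \<Longrightarrow> (\<And>f0. f = G f0 \<Longrightarrow> f0 \<in> hom X A B \<Longrightarrow> P) \<Longrightarrow> P"
proof -
  assume f: "f \<in> hom K A B" and r: "\<And>f0. f = G f0 \<Longrightarrow> f0 \<in> hom X A B \<Longrightarrow> P"
  have "f \<in> arr K" using f unfolding hom_def by blast
  then have "f \<in> G ` arr X" by (simp only: arrK_G)
  then obtain f0 where "f = G f0" "f0 \<in> arr X" by blast
  moreover then have "f0 \<in> hom X A B" using f unfolding hom_def by auto
  ultimately show P using r by blast
qed

lemma G_hom: "f \<in> hom X A B \<Longrightarrow> G f \<in> hom K A B"
  using G_arr unfolding hom_def by auto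

lemma bng_trm: "bng X (trm X) = ident X (trm X)"
  using bng_uniq[of "ident X (trm X)"] by simp

lemma G_functor: "strict_cart_diff_functor X K (\<lambda>A. A) G"
  unfolding strict_cart_diff_functor_def strict_cart_klinear_functor_def strong_cart_klinear_functor_def
proof (intro conjI ballI allI impI)
  show "is_functor X K (\<lambda>A. A) G"
    unfolding is_functor_def
  proof (intro conjI ballI allI impI)
    show "category X" by (rule cat)
    show "category K" by (rule cdcl.cat[OF K_cdcl])
  next
    fix A assume "A \<in> obj X" then show "A \<in> obj K" "G (ident X A) = ident K A" using G_id by simp_all
  next
    fix A B f assume "f \<in> hom X A B" then show "G f \<in> hom K A B" by (rule G_hom)
  next
    fix A B D f g assume "f \<in> hom X A B" "g \<in> hom X B D"
    then show "G (cmp X g f) = cmp K (G g) (G f)" using G_cmp unfolding hom_def by auto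
  qed
  have bt: "bng K (trm X) = ident K (trm X)" using G_bng[of "trm X"] G_id[of "trm X"] bng_trm by simp
  show "is_iso K (bng K (trm X)) (trm X) (trm K)" unfolding bt using cdcl.ident_iso[OF K_cdcl] by simp
  show "trm X = trm K" by simp
next
  fix A B assume a: "A \<in> obj X" "B \<in> obj X"
  have om: "omegaF X K G A B = ident K (prd K A B)"
    unfolding omegaF_def using a G_tup[of "p1 X A B" "p2 X A B"] G_id[of "prd X A B"] by simp
  show "omegaF X K G A B = ident K (prd K A B)" by (rule om)
  show "is_iso K (omegaF X K G A B) (prd X A B) (prd K A B)" unfolding om using cdcl.ident_iso[OF K_cdcl] a by simp
  show "prd X A B = prd K A B" by simp
next
  fix A B f g r s assume "f \<in> hom X A B" "g \<in> hom X A B"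
  then show "G (pls X (smul X r f) (smul X s g)) = pls K (smul K r (G f)) (smul K s (G g))"
    using G_smul G_pls unfolding hom_def by auto
next
  fix A B f assume "f \<in> hom X A B"
  then show "Dif K (G f) = G (Dif X f)" using G_Dif unfolding hom_def by auto
qed

lemma Gi_functor: "strict_cart_diff_functor K X (\<lambda>A. A) Gi"
  unfolding strict_cart_diff_functor_def strict_cart_klinear_functor_def strong_cart_klinear_functor_def
proof (intro conjI ballI allI impI)
  show "is_functor K X (\<lambda>A. A) Gi"
    unfolding is_functor_def
  proof (intro conjI ballI allI impI)
    show "category X" by (rule cat)
    show "category K" by (rule cdcl.cat[OF K_cdcl])
  next
    fix A assume "A \<in> obj K" then show "A \<in> obj X" "Gi (ident K A) = ident X A" by simp_all
  next
    fix A B f assume "f \<in> hom K A B" then show "Gi f \<in> hom X A B"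
      by (rule homK_E) (auto simp: hom_def)
  next
    fix A B D f g assume f: "f \<in> hom K A B" and g: "g \<in> hom K B D"
    obtain f0 where f0: "f = G f0" "f0 \<in> hom X A B" using f by (rule homK_E)
    obtain g0 where g0: "g = G g0" "g0 \<in> hom X B D" using g by (rule homK_E)
    show "Gi (cmp K g f) = cmp X (Gi g) (Gi f)" using f0 g0 G_cmp[of f0 g0] unfolding hom_def by auto
  qed
  show "is_iso X (bng X (trm K)) (trm K) (trm X)" using bng_trm ident_iso by simp
  show "trm K = trm X" by simp
next
  fix A B assume a: "A \<in> obj K" "B \<in> obj K"
  have om: "omegaF K X Gi A B = ident X (prd X A B)"
    unfolding omegaF_def using a G_p1[of A B] G_p2[of A B] by simp
  show "omegaF K X Gi A B = ident X (prd X A B)" by (rule om)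
  show "is_iso X (omegaF K X Gi A B) (prd K A B) (prd X A B)" unfolding om using ident_iso a by simp
  show "prd K A B = prd X A B" by simp
next
  fix A B f g r s assume f: "f \<in> hom K A B" and g: "g \<in> hom K A B"
  obtain f0 where f0: "f = G f0" "f0 \<in> hom X A B" using f by (rule homK_E)
  obtain g0 where g0: "g = G g0" "g0 \<in> hom X A B" using g by (rule homK_E)
  show "Gi (pls K (smul K r f) (smul K s g)) = pls X (smul X r (Gi f)) (smul X s (Gi g))"
    using f0 g0 G_smul G_pls unfolding hom_def by auto
next
  fix A B f assume f: "f \<in> hom K A B"
  obtain f0 where f0: "f = G f0" "f0 \<in> hom X A B" using f by (rule homK_E)
  show "Dif X (Gi f) = Gi (Dif K f)" using f0 G_Dif unfolding hom_def by auto
qed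

lemma GGi_all: "\<forall>f \<in> arr K. G (Gi f) = f"
proof
  fix f assume "f \<in> arr K"
  then have "f \<in> G ` arr X" by (simp only: arrK_G)
  then obtain f0 where "f = G f0" "f0 \<in> arr X" by blast
  then show "G (Gi f) = f" by simp
qed

end

theorem mainTheorem6:
  fixes X :: "('o, 'a, 'k::comm_semiring_1) cdc"
    and So :: "'o \<Rightarrow> 'o" and Sa :: "'a \<Rightarrow> 'a"
    and eps :: "'o \<Rightarrow> 'a" and th :: "'o \<Rightarrow> 'a"
  assumes "cart_diff_abstract_kleisli X So Sa eps th"
  shows "cart_diff_cat (theta_nat X Sa th)
       \<and> cart_diff_monad (theta_nat X Sa th) So Sa (\<lambda>A. Sa (eps A)) th
       \<and> cart_diff_cat (kl_cat X So Sa eps th)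
       \<and> strict_cart_diff_functor X (kl_cat X So Sa eps th) (\<lambda>A. A) (G_theta X Sa th)
       \<and> strict_cart_diff_functor (kl_cat X So Sa eps th) X (\<lambda>A. A) (G_theta_inv X eps)
       \<and> (\<forall>f \<in> arr X. G_theta_inv X eps (G_theta X Sa th f) = f)
       \<and> (\<forall>f \<in> arr (kl_cat X So Sa eps th). G_theta X Sa th (G_theta_inv X eps f) = f)"
proof -
  interpret akl X So Sa eps th by unfold_locales (rule assms)
  show ?thesis using Y_cdc Y_monad_main K_cdc G_functor Gi_functor GGi_all by simp
qed


end
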